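(* For every $\varepsilon_x,\varepsilon_y\in(-1,1)$, consider the coupled replicator dynamics of the two-person Rock-Scissors-Paper game described in the context, with its heteroclinic cycle $$C_4=\left[(\mathrm{S},\mathrm{R})\to(\mathrm{R},\mathrm{R})\to(\mathrm{P},\mathrm{R})\to(\mathrm{P},\mathrm{S})\to(\mathrm{S},\mathrm{S})\to(\mathrm{R},\mathrm{S})\to(\mathrm{R},\mathrm{P})\to(\mathrm{P},\mathrm{P})\to(\mathrm{S},\mathrm{P})\to(\mathrm{S},\mathrm{R})\right].$$ Then all stability indices of $C_4$ (at all points of its connecting trajectories) are $-\infty$, and $C_4$ is completely unstable.
   Context: Payoff matrices (rows/columns ordered R, S, P): $A=\begin{pmatrix}0&1-\varepsilon_x&-1-\varepsilon_x\\-1-\varepsilon_x&0&1-\varepsilon_x\\1-\varepsilon_x&-1-\varepsilon_x&0\end{pmatrix}$ and $B$ is the same matrix with $\varepsilon_x$ replaced by $\varepsilon_y$. Let $\Delta_X,\Delta_Y\subset\mathbb{R}^3$ be unit simplices and $\Delta=\Delta_X\times\Delta_Y$ with points $(x_1,x_2,x_3;y_1,y_2,y_3)$. The dynamics is $\dot x_i=x_i[(A\mathbf{y})_i-\mathbf{x}^TA\mathbf{y}]$, $\dot y_j=y_j[(B\mathbf{x})_j-\mathbf{y}^TB\mathbf{x}]$. The vertex $(a,b)$, $a,b\in\{\mathrm{R},\mathrm{S},\mathrm{P}\}$, is the equilibrium where $\mathbf{x}=e_1,e_2,e_3$ according as $a=\mathrm{R},\mathrm{S},\mathrm{P}$, and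 similarly $\mathbf{y}$ for $b$. An arrow $(a,b)\to(a',b')$ denotes the heteroclinic connection along the edge of $\Delta$ joining these vertices. For a compact invariant set $S$ with flow $\Phi_t$: $B_\epsilon(S)$ is its $\epsilon$-neighbourhood, $\mathcal{B}_\delta(S)=\{x:\Phi_t(x)\in B_\delta(S)\ \forall t\ge0,\ d(\Phi_t(x),S)\to0\}$, $\ell$ is Lebesgue measure in the appropriate dimension. The local stability index at $x\in S$ is $\sigma(x)=\sigma_+(x)-\sigma_-(x)$, where with $\Sigma_{\epsilon,\delta}(x)=\ell(B_\epsilon(x)\cap\mathcal{B}_\delta(S))/\ell(B_\epsilon(x))$, $\sigma_-(x)=\lim_{\delta\to0}\lim_{\epsilon\to0}\ln\Sigma_{\epsilon,\delta}(x)/\ln\epsilon$, $\sigma_+(x)=\lim_{\delta\to0}\lim_{\epsilon\to0}\ln(1-\Sigma_{\epsilon,\delta}(x))/\ln\epsilon$ (with $\sigma_-=\infty$ if $\Sigma_{\epsilon,\delta}=0$ for all small $\epsilon$, $\sigma_+=\infty$ if $\Sigma_{\epsilon,\delta}=1$ for all small $\epsilon$). $S$ is completely unstable if $\ell(\mathcal{B}_\delta(S))=0$ for some $\delta>0$. *)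

theory Defs
  imports "HOL-Analysis.Analysis"
begin

type_synonym state = "(real^3) \<times> (real^3)"

abbreviation R :: 3 where "R \<equiv> 1"
abbreviation S :: 3 where "S \<equiv> 2"
abbreviation P :: 3 where "P \<equiv> 3"

definition rsp_matrix :: "real \<Rightarrow> real^3^3" where
  "rsp_matrix e = vector [vector [0, 1 - e, -1 - e],
                          vector [-1 - e, 0, 1 - e],
                          vector [1 - e, -1 - e, 0]]"

definition repl_field :: "real \<Rightarrow> real \<Rightarrow> state \<Rightarrow> state" where
  "repl_field ex ey z =
     (let x = fst z; y = snd z; A = rsp_matrix ex; B = rsp_matrix ey in
      ((\<chi> i. x$i * ((A *v y)$i - x \<bullet> (A *v y))),
       (\<chi> j. y$j * ((B *v x)$j - y \<bullet> (B *v x)))))"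

definition simplex3 :: "(real^3) set" where
  "simplex3 = {x. (\<forall>i. 0 \<le> x$i) \<and> (\<Sum>i\<in>UNIV. x$i) = 1}"

definition Delta :: "state set" where
  "Delta = simplex3 \<times> simplex3"

definition is_traj :: "real \<Rightarrow> real \<Rightarrow> (real \<Rightarrow> state) \<Rightarrow> bool" where
  "is_traj ex ey \<phi> \<longleftrightarrow>
     (\<forall>t\<ge>0. (\<phi> has_vector_derivative repl_field ex ey (\<phi> t)) (at t within {0..}))"

definition nbhd :: "state set \<Rightarrow> real \<Rightarrow> state set" where
  "nbhd A d = {z. infdist z A < d}"

definition basin :: "real \<Rightarrow> real \<Rightarrow> state set \<Rightarrow> real \<Rightarrow> state set" where
  "basin ex ey A d = {p \<in> Delta. \<exists>\<phi>. \<phi> 0 = p \<and> is_traj ex ey \<phi> \<and>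
        (\<forall>t\<ge>0. \<phi> t \<in> nbhd A d) \<and> ((\<lambda>t. infdist (\<phi> t) A) \<longlongrightarrow> 0) at_top}"

text \<open>Affine chart of Delta by (x1,x2,y1,y2); 4-dimensional Lebesgue measure on Delta is
  (up to a constant factor) Lebesgue measure of the preimage under this chart.\<close>
definition chart :: "real \<times> real \<times> real \<times> real \<Rightarrow> state" where
  "chart u = (case u of (a, b, c, d) \<Rightarrow>
      (vector [a, b, 1 - a - b], vector [c, d, 1 - c - d]))"

definition ell :: "state set \<Rightarrow> real" where
  "ell A = measure lebesgue (chart -` (A \<inter> Delta))"

definition ell_null :: "state set \<Rightarrow> bool" where
  "ell_null A \<longleftrightarrow> chart -` (A \<inter> Delta) \<in> null_sets lebesgue"

definition Sigma_ratio :: "real \<Rightarrow> real \<Rightarrow> state set \<Rightarrow> state \<Rightarrow> real \<Rightarrow> real \<Rightarrow> real" where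
  "Sigma_ratio ex ey A x \<epsilon> d = ell (ball x \<epsilon> \<inter> basin ex ey A d) / ell (ball x \<epsilon>)"

text \<open>Iterated limit lim_{d->0} lim_{e->0} ln(f e d)/ln e equals s, with the convention that
  the inner limit is infinity if f e d = 0 for all small e.\<close>
definition iter_index_is :: "(real \<Rightarrow> real \<Rightarrow> real) \<Rightarrow> ereal \<Rightarrow> bool" where
  "iter_index_is f s \<longleftrightarrow>
     (\<exists>g :: real \<Rightarrow> ereal.
        (\<forall>\<^sub>F d in at_right 0.
           (if (\<forall>\<^sub>F e in at_right 0. f e d = 0) then g d = \<infinity>
            else ((\<lambda>e. ereal (ln (f e d) / ln e)) \<longlongrightarrow> g d) (at_right 0)))
        \<and> (g \<longlongrightarrow> s) (at_right 0))"

definition sigma_minus_is :: "real \<Rightarrow> real \<Rightarrow> state set \<Rightarrow> state \<Rightarrow> ereal \<Rightarrow> bool" where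
  "sigma_minus_is ex ey A x s \<longleftrightarrow> iter_index_is (\<lambda>e d. Sigma_ratio ex ey A x e d) s"

definition sigma_plus_is :: "real \<Rightarrow> real \<Rightarrow> state set \<Rightarrow> state \<Rightarrow> ereal \<Rightarrow> bool" where
  "sigma_plus_is ex ey A x s \<longleftrightarrow> iter_index_is (\<lambda>e d. 1 - Sigma_ratio ex ey A x e d) s"

definition stability_index_is :: "real \<Rightarrow> real \<Rightarrow> state set \<Rightarrow> state \<Rightarrow> ereal \<Rightarrow> bool" where
  "stability_index_is ex ey A x s \<longleftrightarrow>
     (\<exists>sp sm. sigma_plus_is ex ey A x sp \<and> sigma_minus_is ex ey A x sm \<and> s = sp - sm)"

definition completely_unstable :: "real \<Rightarrow> real \<Rightarrow> state set \<Rightarrow> bool" where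
  "completely_unstable ex ey A \<longleftrightarrow> (\<exists>d>0. ell_null (basin ex ey A d))"

definition vtx :: "3 \<Rightarrow> 3 \<Rightarrow> state" where
  "vtx a b = (axis a 1, axis b 1)"

definition C4_vertices :: "(3 \<times> 3) list" where
  "C4_vertices = [(S,R), (R,R), (P,R), (P,S), (S,S), (R,S), (R,P), (P,P), (S,P)]"

definition C4_edges :: "(state \<times> state) set" where
  "C4_edges = {(vtx (fst (C4_vertices ! k)) (snd (C4_vertices ! k)),
                vtx (fst (C4_vertices ! ((k + 1) mod 9))) (snd (C4_vertices ! ((k + 1) mod 9))))
               | k. k < 9}"

text \<open>The cycle as a set: its equilibria together with its connecting trajectories (the edges).\<close>
definition C4 :: "state set" where
  "C4 = (\<Union>(v, w)\<in>C4_edges. closed_segment v w)"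

definition C4_connections :: "state set" where
  "C4_connections = (\<Union>(v, w)\<in>C4_edges. open_segment v w)"

end

theory Submission
  imports Defs
begin

lemma H1:
  fixes f f' :: "real \<Rightarrow> real"
  assumes "a \<le> b" "continuous_on {a..b} f"
    "\<And>t. a < t \<Longrightarrow> t < b \<Longrightarrow> (f has_real_derivative f' t) (at t)"
    "\<And>t. a < t \<Longrightarrow> t < b \<Longrightarrow> f' t \<ge> c"
  shows "f b - f a \<ge> c * (b - a)"
proof -
  have "(\<lambda>t. f t - c * t) a \<le> (\<lambda>t. f t - c * t) b"
  proof (rule DERIV_nonneg_imp_increasing_open[OF assms(1)])
    fix t assume "a < t" "t < b"
    show "\<exists>y. ((\<lambda>t. f t - c * t) has_real_derivative y) (at t) \<and> 0 \<le> y"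
      using assms(3,4)[OF \<open>a < t\<close> \<open>t < b\<close>]
      by (intro exI[of _ "f' t - c"]) (auto intro!: derivative_eq_intros)
  next
    show "continuous_on {a..b} (\<lambda>t. f t - c * t)"
      using assms(2) by (intro continuous_intros) auto
  qed
  then show ?thesis by (simp add: algebra_simps)
qed

lemma H5:
  fixes f f' :: "real \<Rightarrow> real"
  assumes "continuous_on {T..} f" "c > 0"
    "\<And>t. T < t \<Longrightarrow> (f has_real_derivative f' t) (at t)"
    "\<And>t. T < t \<Longrightarrow> f' t \<ge> c"
    "\<And>t. T \<le> t \<Longrightarrow> f t \<le> M"
  shows False
proof -
  define b where "b = T + (M - f T + 1) / c + 1"
  have "M - f T \<ge> 0" using assms(5)[of T] by simp
  then have "(M - f T + 1) / c \<ge> 0" using assms(2) by simp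
  then have "T \<le> b" unfolding b_def by simp
  have "f b - f T \<ge> c * (b - T)"
    by (rule H1[OF \<open>T \<le> b\<close> continuous_on_subset[OF assms(1)]]) (use assms in auto)
  moreover have "c * (b - T) = M - f T + 1 + c" unfolding b_def using assms(2) by (simp add: field_simps)
  moreover have "f b \<le> M" using assms(5) \<open>T \<le> b\<close> by simp
  ultimately show False using assms(2) by linarith
qed

lemma H2:
  fixes f :: "real \<Rightarrow> real"
  assumes "a \<le> b" "continuous_on {a..b} f" "f a \<le> v" "v < f b"
  shows "\<exists>t1. a \<le> t1 \<and> t1 < b \<and> f t1 = v \<and> (\<forall>t. t1 < t \<and> t \<le> b \<longrightarrow> f t > v)"
proof -
  let ?K = "{a..b} \<inter> f -` {..v}"
  have "closed ?K"
    using assms(2) by (intro continuous_closed_preimage) auto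
  moreover have "bounded ?K" by (rule bounded_subset[of "{a..b}"]) auto
  ultimately have cK: "compact ?K" by (simp add: compact_eq_bounded_closed)
  have "a \<in> ?K" using assms by auto
  then obtain t1 where t1: "t1 \<in> ?K" "\<forall>t\<in>?K. t \<le> t1"
    using compact_attains_sup[OF cK] by blast
  have above: "\<forall>t. t1 < t \<and> t \<le> b \<longrightarrow> f t > v"
  proof (intro allI impI)
    fix t assume "t1 < t \<and> t \<le> b"
    then have "t \<in> {a..b}" using t1 by auto
    with t1(2) \<open>t1 < t \<and> t \<le> b\<close> show "f t > v" by force
  qed
  have "t1 < b" using t1 assms(4) by (cases "t1 = b") auto
  have "f t1 = v"
  proof (rule ccontr)
    assume "f t1 \<noteq> v"
    then have "f t1 < v" using t1 by auto
    have "continuous_on {t1..b} f" using assms(2) t1 by (auto intro: continuous_on_subset)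
    then obtain s where s: "t1 \<le> s" "s \<le> b" "f s = v"
      using IVT'[of f t1 v b] \<open>f t1 < v\<close> assms(4) \<open>t1 < b\<close> by auto
    then have "s \<noteq> t1" using \<open>f t1 < v\<close> by auto
    then have "t1 < s" using s by auto
    then have "f s > v" using above s(2) by blast
    then show False using s(3) by simp
  qed
  then show ?thesis using t1 \<open>t1 < b\<close> above by auto
qed

lemma H3:
  fixes f :: "real \<Rightarrow> real"
  assumes "a \<le> b" "continuous_on {a..b} f" "f b \<le> v" "v < f a"
  shows "\<exists>t2. a < t2 \<and> t2 \<le> b \<and> f t2 = v \<and> (\<forall>t. a \<le> t \<and> t < t2 \<longrightarrow> f t > v)"
proof -
  have c: "continuous_on {-b..-a} (\<lambda>s. f (- s))"
    using assms(2) by (intro continuous_on_compose2[OF assms(2)]) (auto intro!: continuous_intros)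
  obtain t1 where "-b \<le> t1" "t1 < -a" "f (-t1) = v" "\<forall>t. t1 < t \<and> t \<le> -a \<longrightarrow> f (- t) > v"
    using H2[OF _ c, of v] assms by auto
  note A = this
  show ?thesis
  proof (intro exI[of _ "-t1"] conjI allI impI)
    fix t assume "a \<le> t \<and> t < - t1"
    then show "v < f t" using A(4)[rule_format, of "-t"] by auto
  qed (use A in auto)
qed

lemma H4:
  fixes f :: "real \<Rightarrow> real"
  assumes "a \<le> b" "continuous_on {a..b} f" "\<And>t. a \<le> t \<Longrightarrow> t \<le> b \<Longrightarrow> f t \<noteq> v"
  shows "f a < v \<longleftrightarrow> f b < v"
proof
  assume "f a < v"
  show "f b < v"
  proof (rule ccontr)
    assume "\<not> f b < v"
    then obtain s where "a \<le> s" "s \<le> b" "f s = v" using IVT'[of f a v b] assms \<open>f a < v\<close> by auto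
    then show False using assms(3) by auto
  qed
next
  assume "f b < v"
  show "f a < v"
  proof (rule ccontr)
    assume "\<not> f a < v"
    then obtain s where "a \<le> s" "s \<le> b" "f s = v" using IVT2'[of f b v a] assms \<open>f b < v\<close> by auto
    then show False using assms(3) by auto
  qed
qed

lemma pieceA1:
  fixes ex ey m d xb xp xm yb yp ym :: real
  assumes m: "0 < m" "m \<le> 1 - \<bar>ex\<bar>" "m \<le> 1 - \<bar>ey\<bar>" and d: "0 < d" "d \<le> m / 64"
  and pos: "0 < xb" "0 < xp" "0 < xm" "0 < yb" "0 < yp" "0 < ym"
  and s: "xb + xp + xm = 1" "yb + yp + ym = 1"
  and c: "yp < d" "ym < d"
  shows "xp*(2*yb - (1+ex)*yp - (1-ex)*ym) + xb*((1-ex)*yb - 2*yp + (1+ex)*ym)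
        + (m/8)*(2*xm - (1+ey)*xb - (1-ey)*xp) \<ge> m/8"
proof -
  have e: "-1 < ex" "ex < 1" "-1 < ey" "ey < 1" "m \<le> 1 - ex" "m \<le> 1 + ex" using m by auto
  have P1: "2*yb - (1+ex)*yp - (1-ex)*ym \<ge> 2 - 8*d"
  proof -
    have "(1+ex)*yp \<le> 2*d" by (rule mult_mono) (use e c pos in auto)
    moreover have "(1-ex)*ym \<le> 2*d" by (rule mult_mono) (use e c pos in auto)
    ultimately show ?thesis using s c by linarith
  qed
  have P2: "(1-ex)*yb - 2*yp + (1+ex)*ym \<ge> m - 4*d"
  proof -
    have "m*(1 - 2*d) \<le> (1-ex)*yb" by (rule mult_mono) (use e c pos s d in auto)
    moreover have "(1+ex)*ym \<ge> 0" using e pos by simp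
    moreover have "m * d \<le> d" using m d e by simp
    ultimately show ?thesis using c by (simp add: algebra_simps)
  qed
  have R: "2*xm - (1+ey)*xb - (1-ey)*xp \<ge> 2*xm - 2*xb - 2*xp"
  proof -
    have "(1+ey)*xb \<le> 2*xb" by (rule mult_right_mono) (use e pos in auto)
    moreover have "(1-ey)*xp \<le> 2*xp" by (rule mult_right_mono) (use e pos in auto)
    ultimately show ?thesis by linarith
  qed
  have A: "xp*(2*yb - (1+ex)*yp - (1-ex)*ym) \<ge> xp*(2 - 8*d)"
    by (rule mult_left_mono[OF P1]) (use pos in simp)
  have B: "xb*((1-ex)*yb - 2*yp + (1+ex)*ym) \<ge> xb*(m - 4*d)"
    by (rule mult_left_mono[OF P2]) (use pos in simp)
  have C: "(m/8)*(2*xm - (1+ey)*xb - (1-ey)*xp) \<ge> (m/8)*(2*xm - 2*xb - 2*xp)"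
    by (rule mult_left_mono[OF R]) (use m in simp)
  have D1: "xp*(2 - 8*d) \<ge> xp * (m/2)" by (rule mult_left_mono) (use d m pos e in auto)
  have D2: "xb*(m - 4*d) \<ge> xb * (m/2)" by (rule mult_left_mono) (use d m pos e in auto)
  have "xp * (m/2) + xb * (m/2) + (m/8)*(2*xm - 2*xb - 2*xp) = (m/4) * (xm + xb + xp)"
    by (simp add: algebra_simps)
  also have "\<dots> = m/4" using s by simp
  finally show ?thesis using A B C D1 D2 m by linarith
qed

lemma pieceA2:
  fixes ex ey m d xb xp xm yb yp ym :: real
  assumes m: "0 < m" "m \<le> 1 - \<bar>ex\<bar>" "m \<le> 1 - \<bar>ey\<bar>" and d: "0 < d" "d \<le> m / 64"
  and pos: "0 < xb" "0 < xp" "0 < xm" "0 < yb" "0 < yp" "0 < ym"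
  and s: "xb + xp + xm = 1" "yb + yp + ym = 1"
  and c: "xb < d" "xp < d" "ym < d"
  shows "xp*(2*yb - (1+ex)*yp - (1-ex)*ym) + xb*((1-ex)*yb - 2*yp + (1+ex)*ym)
        + (m/8)*(2*xm - (1+ey)*xb - (1-ey)*xp) \<ge> m/8"
proof -
  have e: "-1 < ex" "ex < 1" "-1 < ey" "ey < 1" "m \<le> 1 - ex" "m \<le> 1 + ex" "m \<le> 1" using m by auto
  have P1: "2*yb - (1+ex)*yp - (1-ex)*ym \<ge> -2"
  proof -
    have "(1+ex)*yp \<le> 2*yp" by (rule mult_right_mono) (use e pos in auto)
    moreover have "(1-ex)*ym \<le> 2*ym" by (rule mult_right_mono) (use e pos in auto)
    ultimately show ?thesis using pos s by linarith
  qed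
  have P2: "(1-ex)*yb - 2*yp + (1+ex)*ym \<ge> -2"
  proof -
    have "(1-ex)*yb \<ge> 0" "(1+ex)*ym \<ge> 0" using e pos by auto
    then show ?thesis using s pos by linarith
  qed
  have R: "2*xm - (1+ey)*xb - (1-ey)*xp \<ge> 2 - 8*d"
  proof -
    have "(1+ey)*xb \<le> 2*d" by (rule mult_mono) (use e pos c in auto)
    moreover have "(1-ey)*xp \<le> 2*d" by (rule mult_mono) (use e pos c in auto)
    ultimately show ?thesis using s c by linarith
  qed
  have A: "xp*(2*yb - (1+ex)*yp - (1-ex)*ym) \<ge> xp*(-2)"
    by (rule mult_left_mono[OF P1]) (use pos in simp)
  have B: "xb*((1-ex)*yb - 2*yp + (1+ex)*ym) \<ge> xb*(-2)"
    by (rule mult_left_mono[OF P2]) (use pos in simp)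
  have C: "(m/8)*(2*xm - (1+ey)*xb - (1-ey)*xp) \<ge> (m/8)*(2 - 8*d)"
    by (rule mult_left_mono[OF R]) (use m in simp)
  have "m * d \<le> d" using m d e by simp
  moreover have C': "(m/8)*(2*xm - (1+ey)*xb - (1-ey)*xp) \<ge> m/4 - m*d"
    using C by (simp add: algebra_simps)
  ultimately show ?thesis using A B c d m by linarith
qed

lemma pieceA3:
  fixes ex ey m d xb xp xm yb yp ym :: real
  assumes m: "0 < m" "m \<le> 1 - \<bar>ex\<bar>" "m \<le> 1 - \<bar>ey\<bar>" and d: "0 < d" "d \<le> m / 64"
  and pos: "0 < xb" "0 < xp" "0 < xm" "0 < yb" "0 < yp" "0 < ym"
  and s: "xb + xp + xm = 1" "yb + yp + ym = 1" and yb: "yb > 1/2"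
  and c: "xm < d" "xb < d" "yp < d"
  shows "xp*(2*yb - (1+ex)*yp - (1-ex)*ym) + xb*((1-ex)*yb - 2*yp + (1+ex)*ym)
        + (m/8)*(2*xm - (1+ey)*xb - (1-ey)*xp) \<ge> m/8"
proof -
  have e: "-1 < ex" "ex < 1" "-1 < ey" "ey < 1" "m \<le> 1 - ex" "m \<le> 1 + ex" "m \<le> 1" using m by auto
  have P1: "2*yb - (1+ex)*yp - (1-ex)*ym \<ge> m/2 - 2*d"
  proof -
    have "(1+ex)*yp \<le> 2*d" by (rule mult_mono) (use e c pos in auto)
    moreover have "(1-ex)*ym \<le> (1-ex)*yb" by (rule mult_left_mono) (use e s yb pos in auto)
    moreover have "m*(1/2) \<le> (1+ex)*yb" by (rule mult_mono) (use e yb pos in auto)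
    ultimately show ?thesis by (simp add: algebra_simps)
  qed
  have P2: "(1-ex)*yb - 2*yp + (1+ex)*ym \<ge> -2"
  proof -
    have "(1-ex)*yb \<ge> 0" "(1+ex)*ym \<ge> 0" using e pos by auto
    then show ?thesis using s pos by linarith
  qed
  have R: "2*xm - (1+ey)*xb - (1-ey)*xp \<ge> -2"
  proof -
    have "(1+ey)*xb \<le> 2*xb" by (rule mult_right_mono) (use e pos in auto)
    moreover have "(1-ey)*xp \<le> 2*xp" by (rule mult_right_mono) (use e pos in auto)
    ultimately show ?thesis using s pos by linarith
  qed
  have A: "xp*(2*yb - (1+ex)*yp - (1-ex)*ym) \<ge> (1 - 2*d)*(m/2 - 2*d)"
    by (rule mult_mono) (use P1 s c d e pos in auto)
  have B: "xb*((1-ex)*yb - 2*yp + (1+ex)*ym) \<ge> xb*(-2)"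
    by (rule mult_left_mono[OF P2]) (use pos in simp)
  have C: "(m/8)*(2*xm - (1+ey)*xb - (1-ey)*xp) \<ge> (m/8)*(-2)"
    by (rule mult_left_mono[OF R]) (use m in simp)
  have "m * d \<le> d" using m d e by simp
  moreover have "d * d \<ge> 0" by simp
  moreover have A': "xp*(2*yb - (1+ex)*yp - (1-ex)*ym) \<ge> m/2 - 2*d - m*d + 4*(d*d)"
    using A by (simp add: algebra_simps)
  ultimately show ?thesis using B C c d m by linarith
qed

lemma ineqS:
  fixes ex m d u v w :: real
  assumes m: "0 < m" "m \<le> 1 - \<bar>ex\<bar>" and d: "0 < d" "d \<le> m / 64"
  and pos: "0 < u" "0 < v" "0 < w" and s: "u + v + w = 1" and w: "w < d" and vu: "v \<ge> (1 - 4*d) * u"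
  shows "2 * v - (1-ex)*u - (1+ex)*w \<ge> m/8"
proof -
  have e: "-1 < ex" "ex < 1" "m \<le> 1 - ex" "m \<le> 1 + ex" "m \<le> 1" using m by auto
  have a: "(1-ex)*u \<le> (2-m)*u" by (rule mult_right_mono) (use e pos in auto)
  have b: "(1+ex)*w \<le> 2*d" by (rule mult_mono) (use e pos w in auto)
  have c: "(2 - m/4) * v \<ge> (2 - m/4) * ((1 - 4*d) * u)" by (rule mult_left_mono[OF vu]) (use e in auto)
  have c2: "(2 - m/4) * ((1 - 4*d) * u) - (2 - 3*m/4) * u = (m/2 - 8*d + m*d) * u"
    by (simp add: algebra_simps)
  have c3: "(m/2 - 8*d + m*d) * u \<ge> 0" using d m pos by (intro mult_nonneg_nonneg) auto
  have "2 * v - (2-m)*u - (m/4)*(u+v) = (2 - m/4) * v - (2 - 3*m/4) * u" by (simp add: field_simps)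
  then have k: "2 * v - (2-m)*u \<ge> (m/4)*(u+v)" using c c2 c3 by linarith
  have "(m/4)*(u+v) \<ge> (m/4)*(1-d)" by (rule mult_left_mono) (use s w m in auto)
  then have "(m/4)*(u+v) \<ge> m/4 - (m*d)/4" by (simp add: algebra_simps)
  moreover have "m * d \<le> d" using m d e by simp
  ultimately show ?thesis using a b k d m by linarith
qed

lemma ineqW:
  fixes ex m d u v w :: real
  assumes m: "0 < m" "m \<le> 1 - \<bar>ex\<bar>" and d: "0 < d" "d \<le> m / 64"
  and pos: "0 < u" "0 < v" "0 < w" and s: "u + v + w = 1" and w: "w < d"
  shows "(1+ex)*u + (1-ex) * v - 2*w \<ge> 0"
proof -
  have e: "-1 < ex" "ex < 1" "m \<le> 1 - ex" "m \<le> 1 + ex" "m \<le> 1" using m by auto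
  have "(1+ex)*u \<ge> m*u" by (rule mult_right_mono) (use e pos in auto)
  moreover have "(1-ex) * v \<ge> m * v" by (rule mult_right_mono) (use e pos in auto)
  moreover have "m*(u+v) \<ge> m*(1-d)" by (rule mult_left_mono) (use s w m in auto)
  then have "m*u + m * v \<ge> m - m*d" by (simp add: algebra_simps)
  moreover have "m * d \<le> d" using m d e by simp
  ultimately show ?thesis using w d m by linarith
qed

lemma ineqR:
  fixes ey xb xp xm :: real
  assumes "\<bar>ey\<bar> < 1" "0 < xb" "0 < xp" "xb + xp + xm = 1" "xm \<ge> 1/2"
  shows "2*xm - (1+ey)*xb - (1-ey)*xp \<ge> 0"
proof -
  have "(1+ey)*xb \<le> 2*xb" by (rule mult_right_mono) (use assms in auto)
  moreover have "(1-ey)*xp \<le> 2*xp" by (rule mult_right_mono) (use assms in auto)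
  ultimately show ?thesis using assms by linarith
qed

lemma idx3:
  fixes b :: 3
  shows "b + 1 \<noteq> b" "b - 1 \<noteq> b" "b + 1 \<noteq> b - 1" "b \<noteq> b + 1" "b \<noteq> b - 1" "b - 1 \<noteq> b + 1"
    "b + 1 + 1 = b - 1" "b - 1 - 1 = b + 1" "b + 1 - 1 = b" "b - 1 + 1 = b"
    "b + 2 = b - 1" "b - 2 = b + 1"
  using exhaust_3[of b] by auto

lemma three: fixes b j :: 3 shows "j = b \<or> j = b + 1 \<or> j = b - 1"
  using exhaust_3[of b] exhaust_3[of j] by auto

lemma sum3: fixes f :: "3 \<Rightarrow> real" shows "(\<Sum>k\<in>UNIV. f k) = f b + f (b + 1) + f (b - 1)"
proof -
  have "UNIV = {b, b + 1, b - 1}" using three[of _ b] by auto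
  then have "(\<Sum>k\<in>UNIV. f k) = (\<Sum>k\<in>{b, b + 1, b - 1}. f k)" by metis
  also have "\<dots> = f b + f (b + 1) + f (b - 1)" using idx3[of b] by (simp add: add.assoc)
  finally show ?thesis .
qed

definition axf :: "real \<Rightarrow> (3 \<Rightarrow> real) \<Rightarrow> 3 \<Rightarrow> real" where
  "axf e v i = (1 - e) * v (i + 1) - (1 + e) * v (i - 1)"

locale orb =
  fixes ex ey m d :: real and x y :: "real \<Rightarrow> 3 \<Rightarrow> real"
  assumes m: "0 < m" "m \<le> 1 - \<bar>ex\<bar>" "m \<le> 1 - \<bar>ey\<bar>"
  and d: "0 < d" "d \<le> m / 64"
  and posx: "\<And>t i. t \<ge> 0 \<Longrightarrow> x t i > 0" and posy: "\<And>t i. t \<ge> 0 \<Longrightarrow> y t i > 0"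
  and sumx: "\<And>t. t \<ge> 0 \<Longrightarrow> (\<Sum>i\<in>UNIV. x t i) = 1"
  and sumy: "\<And>t. t \<ge> 0 \<Longrightarrow> (\<Sum>i\<in>UNIV. y t i) = 1"
  and contx: "\<And>i. continuous_on {0..} (\<lambda>t. x t i)"
  and conty: "\<And>i. continuous_on {0..} (\<lambda>t. y t i)"
  and dlx: "\<And>t i. t > 0 \<Longrightarrow> ((\<lambda>s. ln (x s i)) has_real_derivative
            (axf ex (y t) i - (\<Sum>k\<in>UNIV. x t k * axf ex (y t) k))) (at t)"
  and dly: "\<And>t i. t > 0 \<Longrightarrow> ((\<lambda>s. ln (y s i)) has_real_derivative
            (axf ey (x t) i - (\<Sum>k\<in>UNIV. y t k * axf ey (x t) k))) (at t)"
  and near: "\<And>t. t \<ge> 0 \<Longrightarrow> \<exists>b.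
       (x t (b - 1) < d \<and> y t (b + 1) < d \<and> y t (b - 1) < d) \<or>
       (x t (b + 1) < d \<and> y t (b + 1) < d \<and> y t (b - 1) < d) \<or>
       (x t b < d \<and> x t (b + 1) < d \<and> y t (b - 1) < d)"
begin

lemma ex1: "\<bar>ex\<bar> < 1" "\<bar>ey\<bar> < 1" "m \<le> 1" "d \<le> 1/64" using m d by auto

lemma sx: "t \<ge> 0 \<Longrightarrow> x t b + x t (b + 1) + x t (b - 1) = 1"
  using sumx[of t] sum3[of "x t" b] by simp
lemma sy: "t \<ge> 0 \<Longrightarrow> y t b + y t (b + 1) + y t (b - 1) = 1"
  using sumy[of t] sum3[of "y t" b] by simp

lemma lncx: "continuous_on {0..} (\<lambda>t. ln (x t i))"
  using contx posx by (intro continuous_intros) (auto simp: less_le)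
lemma lncy: "continuous_on {0..} (\<lambda>t. ln (y t i))"
  using conty posy by (intro continuous_intros) (auto simp: less_le)

lemma drx: "t > 0 \<Longrightarrow> ((\<lambda>s. ln (x s i) - ln (x s j)) has_real_derivative
            (axf ex (y t) i - axf ex (y t) j)) (at t)"
  using DERIV_diff[OF dlx[of t i] dlx[of t j]] by simp
lemma dry: "t > 0 \<Longrightarrow> ((\<lambda>s. ln (y s i) - ln (y s j)) has_real_derivative
            (axf ey (x t) i - axf ey (x t) j)) (at t)"
  using DERIV_diff[OF dly[of t i] dly[of t j]] by simp

lemma axf_b: "axf e v b = (1 - e) * v (b + 1) - (1 + e) * v (b - 1)"
  "axf e v (b + 1) = (1 - e) * v (b - 1) - (1 + e) * v b"
  "axf e v (b - 1) = (1 - e) * v b - (1 + e) * v (b + 1)"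
  unfolding axf_def idx3 by simp_all

lemma sx3: "t \<ge> 0 \<Longrightarrow> j \<noteq> k \<Longrightarrow> k \<noteq> l \<Longrightarrow> j \<noteq> l \<Longrightarrow> x t j + x t k + x t l = 1"
  using sx[of t j] three[of k j] three[of l j] idx3[of j] by auto
lemma sy3: "t \<ge> 0 \<Longrightarrow> j \<noteq> k \<Longrightarrow> k \<noteq> l \<Longrightarrow> j \<noteq> l \<Longrightarrow> y t j + y t k + y t l = 1"
  using sy[of t j] three[of k j] three[of l j] idx3[of j] by auto

lemma pm: "0 \<le> a \<Longrightarrow> a \<le> A \<Longrightarrow> 0 \<le> u \<Longrightarrow> u \<le> U \<Longrightarrow> a * u \<le> A * (U::real)"
  by (rule mult_mono) auto

lemma eqm1: "(b'::3) - 1 = b - 1 \<Longrightarrow> b' = b" by simp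

lemma caseB:
  assumes T: "T \<ge> 0" and lt: "\<And>t j. t \<ge> T \<Longrightarrow> y t j < 1/2"
  shows False
proof -
  have nearB: "\<exists>b. x t b < d \<and> x t (b + 1) < d \<and> y t (b - 1) < d" if "t \<ge> T" for t
  proof -
    have t0: "t \<ge> 0" using that T by simp
    obtain b where b: "(x t (b - 1) < d \<and> y t (b + 1) < d \<and> y t (b - 1) < d) \<or>
       (x t (b + 1) < d \<and> y t (b + 1) < d \<and> y t (b - 1) < d) \<or>
       (x t b < d \<and> x t (b + 1) < d \<and> y t (b - 1) < d)" using near[OF t0] by blast
    have "y t b < 1/2" using lt that by simp
    moreover have "y t b + y t (b + 1) + y t (b - 1) = 1" using sy t0 by simp
    ultimately show ?thesis using b ex1 by auto
  qed
  have big: "y t k > 1/2 - d" if "t \<ge> T" "y t j < d" "k \<noteq> j" for t j k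
  proof -
    obtain l where l: "l \<noteq> j" "l \<noteq> k" using three[of _ j] idx3[of j] by metis
    have "y t j + y t k + y t l = 1" using sy3[of t j k l] l that T by auto
    moreover have "y t l < 1/2" using lt that by simp
    ultimately show ?thesis using that by linarith
  qed
  obtain b where bT: "x T b < d" "x T (b + 1) < d" "y T (b - 1) < d" using nearB[of T] by auto
  have small: "y t (b - 1) < 1/4" if "t \<ge> T" for t
  proof -
    have "y T (b - 1) < 1/4 \<longleftrightarrow> y t (b - 1) < 1/4"
    proof (rule H4[OF that])
      show "continuous_on {T..t} (\<lambda>s. y s (b - 1))" using conty by (rule continuous_on_subset) (use T in auto)
      fix s assume s: "T \<le> s" "s \<le> t"
      obtain b' where b': "x s b' < d" "x s (b' + 1) < d" "y s (b' - 1) < d" using nearB[of s] s by auto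
      show "y s (b - 1) \<noteq> 1/4"
      proof (cases "b' - 1 = b - 1")
        case True then show ?thesis using b' ex1 by auto
      next
        case False then show ?thesis using big[of s "b' - 1" "b - 1"] s b' ex1 by auto
      qed
    qed
    then show ?thesis using bT ex1 by auto
  qed
  have xbig: "x t (b - 1) > 1 - 2 * d" if tT: "t \<ge> T" for t
  proof -
    obtain b' where b': "x t b' < d" "x t (b' + 1) < d" "y t (b' - 1) < d" using nearB[OF tT] by blast
    have "b' = b"
    proof (rule ccontr)
      assume "b' \<noteq> b"
      then have "b' - 1 \<noteq> b - 1" by simp
      then show False using big[of t "b' - 1" "b - 1"] small[OF tT] b' tT ex1 by auto
    qed
    then show ?thesis using b' sx[of t b] tT T by auto
  qed
  show False
  proof (rule H5[of T "\<lambda>t. ln (y t (b + 1)) - ln (y t b)" 1])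
    show "continuous_on {T..} (\<lambda>t. ln (y t (b + 1)) - ln (y t b))"
      by (intro continuous_on_diff; rule continuous_on_subset[OF lncy]) (use T in auto)
    fix t assume "T < t"
    then show "((\<lambda>t. ln (y t (b + 1)) - ln (y t b)) has_real_derivative
        axf ey (x t) (b + 1) - axf ey (x t) b) (at t)" using dry T by simp
    have t0: "t \<ge> 0" using T \<open>T < t\<close> by simp
    have xb: "x t b < d" "x t (b + 1) < d"
    proof -
      obtain b' where b': "x t b' < d" "x t (b' + 1) < d" "y t (b' - 1) < d" using nearB[OF less_imp_le[OF \<open>T < t\<close>]] by blast
      have "b' = b"
      proof (rule ccontr)
        assume "b' \<noteq> b"
        then have "b' - 1 \<noteq> b - 1" by simp
        then show False using big[of t "b' - 1" "b - 1"] small[of t] b' \<open>T < t\<close> ex1 by auto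
      qed
      then show "x t b < d" "x t (b + 1) < d" using b' by auto
    qed
    have p1: "(1 + ey) * x t b \<le> 2 * d" by (rule pm) (use xb posx[OF t0, of b] ex1 in \<open>auto simp: abs_less_iff less_imp_le\<close>)
    have p2: "(1 - ey) * x t (b + 1) \<le> 2 * d" by (rule pm) (use xb posx[OF t0, of "b + 1"] ex1 in \<open>auto simp: abs_less_iff less_imp_le\<close>)
    have "axf ey (x t) (b + 1) - axf ey (x t) b = 2 * x t (b - 1) - (1 + ey) * x t b - (1 - ey) * x t (b + 1)"
      unfolding axf_b(2,3) unfolding axf_b(1) by (simp add: algebra_simps)
    then show "axf ey (x t) (b + 1) - axf ey (x t) b \<ge> 1"
      using p1 p2 xbig[of t] \<open>T < t\<close> ex1 by linarith
  next
    fix t assume "T \<le> t"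
    have t0: "t \<ge> 0" using T \<open>T \<le> t\<close> by simp
    have "y t b > 1/4"
      using sy[OF t0, of b] small[OF \<open>T \<le> t\<close>] lt[OF \<open>T \<le> t\<close>, of "b + 1"] by linarith
    then have "ln (y t b) \<ge> ln (1/4)" by (intro ln_mono) auto
    moreover have "ln (y t (b + 1)) \<le> ln (1/2)" using lt[OF \<open>T \<le> t\<close>] posy[OF t0] by (intro ln_mono) (auto simp: less_imp_le)
    ultimately show "ln (y t (b + 1)) - ln (y t b) \<le> ln (1/2) - ln (1/4)" by linarith
  qed simp
qed

lemma pA:
  assumes t0: "t \<ge> 0" and yb: "y t b > 1/2"
  shows "(y t (b + 1) < d \<and> y t (b - 1) < d) \<or> (x t b < d \<and> x t (b + 1) < d \<and> y t (b - 1) < d)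
     \<or> (x t (b - 1) < d \<and> x t b < d \<and> y t (b + 1) < d)"
proof -
  obtain b' where b': "(x t (b' - 1) < d \<and> y t (b' + 1) < d \<and> y t (b' - 1) < d) \<or>
       (x t (b' + 1) < d \<and> y t (b' + 1) < d \<and> y t (b' - 1) < d) \<or>
       (x t b' < d \<and> x t (b' + 1) < d \<and> y t (b' - 1) < d)" using near[OF t0] by blast
  have "y t b \<ge> d" using yb ex1 by auto
  consider "b' = b" | "b' = b + 1" | "b' = b - 1" using three[of b' b] by blast
  then show ?thesis
  proof cases
    case 1 then show ?thesis using b' by auto
  next
    case 2 then show ?thesis using b' \<open>y t b \<ge> d\<close> by (simp only: idx3) auto
  next
    case 3 then show ?thesis using b' \<open>y t b \<ge> d\<close> by (simp only: idx3) auto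
  qed
qed

lemma caseA:
  assumes T: "T \<ge> 0" and gt: "\<And>t. t \<ge> T \<Longrightarrow> y t b > 1/2"
  shows False
proof (rule H5[of T "\<lambda>t. ln (x t (b - 1)) + (m/8) * (ln (y t (b + 1)) - ln (y t b))" "m/8"])
  show "continuous_on {T..} (\<lambda>t. ln (x t (b - 1)) + (m/8) * (ln (y t (b + 1)) - ln (y t b)))"
  proof -
    have c1: "continuous_on {T..} (\<lambda>t. ln (x t (b - 1)))" by (rule continuous_on_subset[OF lncx]) (use T in auto)
    have c2: "continuous_on {T..} (\<lambda>t. ln (y t (b + 1)))" by (rule continuous_on_subset[OF lncy]) (use T in auto)
    have c3: "continuous_on {T..} (\<lambda>t. ln (y t b))" by (rule continuous_on_subset[OF lncy]) (use T in auto)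
    show ?thesis by (rule continuous_on_add[OF c1 continuous_on_mult[OF continuous_on_const continuous_on_diff[OF c2 c3]]])
  qed
  show "0 < m / 8" using m by simp
next
  fix t assume "T < t"
  then have t0: "t > 0" "t \<ge> 0" using T by auto
  show "((\<lambda>t. ln (x t (b - 1)) + (m/8) * (ln (y t (b + 1)) - ln (y t b))) has_real_derivative
     (axf ex (y t) (b - 1) - (\<Sum>k\<in>UNIV. x t k * axf ex (y t) k)) +
     (m/8) * (axf ey (x t) (b + 1) - axf ey (x t) b)) (at t)"
    by (intro DERIV_add DERIV_cmult dlx dry t0)
  have xm: "x t (b - 1) = 1 - x t b - x t (b + 1)" using sx[OF t0(2), of b] by simp
  have eq: "(axf ex (y t) (b - 1) - (\<Sum>k\<in>UNIV. x t k * axf ex (y t) k)) +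
     (m/8) * (axf ey (x t) (b + 1) - axf ey (x t) b) =
     x t (b + 1) * (2 * y t b - (1 + ex) * y t (b + 1) - (1 - ex) * y t (b - 1))
     + x t b * ((1 - ex) * y t b - 2 * y t (b + 1) + (1 + ex) * y t (b - 1))
     + (m/8) * (2 * x t (b - 1) - (1 + ey) * x t b - (1 - ey) * x t (b + 1))"
    unfolding sum3[of _ b] unfolding axf_b(2,3) unfolding axf_b(1) xm
    by (simp add: algebra_simps)
  have yb: "y t b > 1/2" using gt \<open>T < t\<close> by simp
  have sxx: "x t b + x t (b + 1) + x t (b - 1) = 1" and syy: "y t b + y t (b + 1) + y t (b - 1) = 1"
    using sx sy t0 by auto
  note ps = posx[OF t0(2), of b] posx[OF t0(2), of "b + 1"] posx[OF t0(2), of "b - 1"]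
            posy[OF t0(2), of b] posy[OF t0(2), of "b + 1"] posy[OF t0(2), of "b - 1"]
  have G: "x t (b + 1) * (2 * y t b - (1 + ex) * y t (b + 1) - (1 - ex) * y t (b - 1))
     + x t b * ((1 - ex) * y t b - 2 * y t (b + 1) + (1 + ex) * y t (b - 1))
     + (m/8) * (2 * x t (b - 1) - (1 + ey) * x t b - (1 - ey) * x t (b + 1)) \<ge> m / 8"
    using pA[OF t0(2) yb]
  proof (elim disjE conjE)
    assume "y t (b + 1) < d" "y t (b - 1) < d"
    then show ?thesis using pieceA1[OF m d ps sxx syy] by simp
  next
    assume "x t b < d" "x t (b + 1) < d" "y t (b - 1) < d"
    then show ?thesis using pieceA2[OF m d ps sxx syy] by simp
  next
    assume "x t (b - 1) < d" "x t b < d" "y t (b + 1) < d"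
    then show ?thesis using pieceA3[OF m d ps sxx syy yb] by simp
  qed
  show "(axf ex (y t) (b - 1) - (\<Sum>k\<in>UNIV. x t k * axf ex (y t) k)) +
     (m/8) * (axf ey (x t) (b + 1) - axf ey (x t) b) \<ge> m / 8"
    using G eq by linarith
next
  fix t assume "T \<le> t"
  then have t0: "t \<ge> 0" using T by auto
  have "x t (b - 1) \<le> 1" using sx[OF t0, of b] posx[OF t0, of b] posx[OF t0, of "b + 1"] by linarith
  then have "ln (x t (b - 1)) \<le> 0" using posx[OF t0] by simp
  moreover have "y t (b + 1) \<le> y t b" using sy[OF t0, of b] posy[OF t0, of "b - 1"] gt[OF \<open>T \<le> t\<close>] by linarith
  then have "ln (y t (b + 1)) - ln (y t b) \<le> 0" using posy[OF t0] by simp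
  then have "(m/8) * (ln (y t (b + 1)) - ln (y t b)) \<le> 0" using m by (simp add: mult_nonneg_nonpos)
  ultimately show "ln (x t (b - 1)) + (m/8) * (ln (y t (b + 1)) - ln (y t b)) \<le> 0" by linarith
qed

lemma step1:
  assumes T: "T \<ge> 0"
  shows "\<exists>t\<ge>T. \<exists>b. x t b < d \<and> x t (b + 1) < d \<and> y t (b - 1) < d \<and>
           \<bar>y t b - 1/2\<bar> \<le> d \<and> \<bar>y t (b + 1) - 1/2\<bar> \<le> d"
proof -
  have "\<exists>t\<ge>T. \<exists>j. y t j = 1/2"
  proof (rule ccontr)
    assume H: "\<not> (\<exists>t\<ge>T. \<exists>j. y t j = 1/2)"
    have keep: "y T j < 1/2 \<longleftrightarrow> y t j < 1/2" if "t \<ge> T" for t j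
    proof (rule H4[OF that])
      show "continuous_on {T..t} (\<lambda>s. y s j)" by (rule continuous_on_subset[OF conty]) (use T in auto)
    qed (use H in auto)
    show False
    proof (cases "\<exists>j. y T j > 1/2")
      case True
      then obtain j where j: "y T j > 1/2" by blast
      show False
      proof (rule caseA[OF T, of j])
        fix t assume "t \<ge> T"
        then have "\<not> y t j < 1/2" "y t j \<noteq> 1/2" using keep[of t j] j H by auto
        then show "y t j > 1/2" by auto
      qed
    next
      case False
      then have "y T j < 1/2" for j using H T by (metis linorder_neqE_linordered_idom order_refl)
      then show False using caseB[OF T] keep by blast
    qed
  qed
  then obtain t j where t: "t \<ge> T" "y t j = 1/2" by blast
  have t0: "t \<ge> 0" using t T by simp
  obtain b' where b': "(x t (b' - 1) < d \<and> y t (b' + 1) < d \<and> y t (b' - 1) < d) \<or>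
       (x t (b' + 1) < d \<and> y t (b' + 1) < d \<and> y t (b' - 1) < d) \<or>
       (x t b' < d \<and> x t (b' + 1) < d \<and> y t (b' - 1) < d)" using near[OF t0] by blast
  have sy': "y t b' + y t (b' + 1) + y t (b' - 1) = 1" using sy[OF t0] by simp
  note ps = posy[OF t0, of b'] posy[OF t0, of "b' + 1"] posy[OF t0, of "b' - 1"]
  have j3: "j = b' \<or> j = b' + 1 \<or> j = b' - 1" using three[of j b'] by blast
  have E3: "x t b' < d \<and> x t (b' + 1) < d \<and> y t (b' - 1) < d"
    using b' j3 t(2) sy' ps ex1 by auto
  moreover have "\<bar>y t b' - 1/2\<bar> \<le> d \<and> \<bar>y t (b' + 1) - 1/2\<bar> \<le> d"
    using E3 j3 t(2) sy' ps ex1 by auto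
  ultimately show ?thesis using t by blast
qed

lemma comp:
  assumes t0: "t \<ge> 0" and xm: "x t (b - 1) \<ge> 1/2"
  shows "y t (b - 1) < d \<or> y t (b - 1) > 1 - 2 * d"
proof -
  obtain b' where b': "(x t (b' - 1) < d \<and> y t (b' + 1) < d \<and> y t (b' - 1) < d) \<or>
       (x t (b' + 1) < d \<and> y t (b' + 1) < d \<and> y t (b' - 1) < d) \<or>
       (x t b' < d \<and> x t (b' + 1) < d \<and> y t (b' - 1) < d)" using near[OF t0] by blast
  have sy': "y t b + y t (b + 1) + y t (b - 1) = 1" using sy[OF t0] by simp
  have "x t (b - 1) \<ge> d" using xm ex1 by auto
  consider "b' = b" | "b' = b + 1" | "b' = b - 1" using three[of b' b] by blast
  then show ?thesis
  proof cases
    case 1 then show ?thesis using b' \<open>x t (b - 1) \<ge> d\<close> by auto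
  next
    case 2 then show ?thesis using b' \<open>x t (b - 1) \<ge> d\<close> by (simp only: idx3) auto
  next
    case 3 then show ?thesis using b' \<open>x t (b - 1) \<ge> d\<close> sy' by (simp only: idx3) auto
  qed
qed

lemma at_half:
  assumes t0: "t \<ge> 0" and xm: "x t (b - 1) = 1/2" and ym: "y t (b - 1) < d"
  shows "(x t (b + 1) < d \<and> y t (b + 1) < d) \<or> (x t b < d \<and> y t b < d)"
proof -
  obtain b' where b': "(x t (b' - 1) < d \<and> y t (b' + 1) < d \<and> y t (b' - 1) < d) \<or>
       (x t (b' + 1) < d \<and> y t (b' + 1) < d \<and> y t (b' - 1) < d) \<or>
       (x t b' < d \<and> x t (b' + 1) < d \<and> y t (b' - 1) < d)" using near[OF t0] by blast
  have sy': "y t b + y t (b + 1) + y t (b - 1) = 1" using sy[OF t0] by simp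
  have sx': "x t b + x t (b + 1) + x t (b - 1) = 1" using sx[OF t0] by simp
  have "x t (b - 1) \<ge> d" using xm ex1 by auto
  consider "b' = b" | "b' = b + 1" | "b' = b - 1" using three[of b' b] by blast
  then show ?thesis
  proof cases
    case 1 then show ?thesis using b' \<open>x t (b - 1) \<ge> d\<close> sx' xm ex1 by auto
  next
    case 2 then show ?thesis using b' \<open>x t (b - 1) \<ge> d\<close> ym by (simp only: idx3) auto
  next
    case 3 then show ?thesis using b' \<open>x t (b - 1) \<ge> d\<close> sy' ym ex1 by (simp only: idx3) auto
  qed
qed

lemma Rderiv:
  "t > 0 \<Longrightarrow> axf ey (x t) (b + 1) - axf ey (x t) b =
     2 * x t (b - 1) - (1 + ey) * x t b - (1 - ey) * x t (b + 1)"
  unfolding axf_b(2,3) unfolding axf_b(1) by (simp add: algebra_simps)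

lemma Rmono:
  assumes "0 \<le> a" "a \<le> c" and xm: "\<And>t. a \<le> t \<Longrightarrow> t \<le> c \<Longrightarrow> x t (b - 1) \<ge> 1/2"
  shows "ln (y c (b + 1)) - ln (y c b) \<ge> ln (y a (b + 1)) - ln (y a b)"
proof -
  have "(ln (y c (b + 1)) - ln (y c b)) - (ln (y a (b + 1)) - ln (y a b)) \<ge> 0 * (c - a)"
  proof (rule H1[OF assms(2), where f' = "\<lambda>t. axf ey (x t) (b + 1) - axf ey (x t) b"])
    show "continuous_on {a..c} (\<lambda>t. ln (y t (b + 1)) - ln (y t b))"
      by (intro continuous_on_diff; rule continuous_on_subset[OF lncy]) (use assms in auto)
    fix t assume t: "a < t" "t < c"
    then show "((\<lambda>t. ln (y t (b + 1)) - ln (y t b)) has_real_derivative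
        axf ey (x t) (b + 1) - axf ey (x t) b) (at t)" using dry assms by simp
    have t0: "t \<ge> 0" "t > 0" using t assms by auto
    show "0 \<le> axf ey (x t) (b + 1) - axf ey (x t) b"
      unfolding Rderiv[OF t0(2)]
      by (rule ineqR) (use ex1 posx[OF t0(1)] sx[OF t0(1), of b] xm t in auto)
  qed
  then show ?thesis by simp
qed

lemma ysmall_between:
  assumes "0 \<le> a" "a \<le> c" and xm: "\<And>t. a \<le> t \<Longrightarrow> t \<le> c \<Longrightarrow> x t (b - 1) \<ge> 1/2"
  shows "y a (b - 1) < 1/2 \<longleftrightarrow> y c (b - 1) < 1/2"
proof (rule H4[OF assms(2)])
  show "continuous_on {a..c} (\<lambda>t. y t (b - 1))" by (rule continuous_on_subset[OF conty]) (use assms in auto)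
  fix t assume t: "a \<le> t" "t \<le> c"
  then have "y t (b - 1) < d \<or> y t (b - 1) > 1 - 2 * d" using comp[of t b] xm assms by auto
  then show "y t (b - 1) \<noteq> 1/2" using ex1 by auto
qed

lemma step3:
  assumes s0: "s \<ge> 0" and E: "x s b < d" "x s (b + 1) < d" "y s (b - 1) < d"
    and h: "\<bar>y s b - 1/2\<bar> \<le> d" "\<bar>y s (b + 1) - 1/2\<bar> \<le> d"
  shows "\<exists>t2>s. x t2 (b - 1) \<le> 1/2"
proof (rule ccontr)
  assume "\<not> (\<exists>t2>s. x t2 (b - 1) \<le> 1/2)"
  then have H: "\<And>t. t > s \<Longrightarrow> x t (b - 1) > 1/2" by auto
  have xs: "x s (b - 1) > 1 - 2 * d" using sx[OF s0, of b] E by linarith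
  have xm: "x t (b - 1) \<ge> 1/2" if "t \<ge> s" for t
    using H[of t] xs ex1 that by (cases "t = s") auto
  have ysm: "y t (b - 1) < d" if "t \<ge> s" for t
  proof -
    have "y t (b - 1) < 1/2" using ysmall_between[OF s0 that xm] E ex1 by auto
    then show ?thesis using comp[of t b] xm[OF that] s0 that ex1 by auto
  qed
  have Rs: "ln (y s (b + 1)) \<ge> ln (1 - 4 * d) + ln (y s b)"
  proof -
    have "y s (b + 1) \<ge> (1 - 4 * d) * y s b"
    proof -
      have "(1 - 4 * d) * y s b \<le> (1 - 4 * d) * (1/2 + d)"
        by (rule mult_left_mono) (use h ex1 in auto)
      also have "\<dots> \<le> 1/2 - d" using d by (simp add: algebra_simps)
      finally show ?thesis using h by linarith
    qed
    moreover have p: "1 - 4 * d > 0" using ex1 by simp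
    ultimately have "ln ((1 - 4 * d) * y s b) \<le> ln (y s (b + 1))"
      using posy[OF s0, of b] by (intro ln_mono) auto
    moreover have "ln ((1 - 4 * d) * y s b) = ln (1 - 4 * d) + ln (y s b)"
      using p posy[OF s0, of b] by (simp add: ln_mult)
    ultimately show ?thesis by simp
  qed
  have vu: "y t (b + 1) \<ge> (1 - 4 * d) * y t b" if "t \<ge> s" for t
  proof -
    have "ln (y t (b + 1)) - ln (y t b) \<ge> ln (y s (b + 1)) - ln (y s b)"
      by (rule Rmono[OF s0 that]) (use xm in auto)
    moreover have t0: "t \<ge> 0" using s0 that by simp
    moreover have p: "1 - 4 * d > 0" using ex1 by simp
    moreover have "ln ((1 - 4 * d) * y t b) = ln (1 - 4 * d) + ln (y t b)"
      using p posy[OF t0, of b] by (simp add: ln_mult)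
    ultimately have "ln (y t (b + 1)) \<ge> ln ((1 - 4 * d) * y t b)"
      using Rs by linarith
    then show ?thesis using p posy[OF t0, of b] posy[OF t0, of "b + 1"] by (subst (asm) ln_le_cancel_iff) auto
  qed
  show False
  proof (rule H5[of s "\<lambda>t. ln (x t b) - ln (x t (b - 1))" "m/8"
        "\<lambda>t. axf ex (y t) b - axf ex (y t) (b - 1)" "ln 2"])
    show "continuous_on {s..} (\<lambda>t. ln (x t b) - ln (x t (b - 1)))"
      by (intro continuous_on_diff; rule continuous_on_subset[OF lncx]) (use s0 in auto)
    show "0 < m / 8" using m by simp
  next
    fix t assume "s < t"
    then have t0: "t > 0" "t \<ge> 0" using s0 by auto
    show "((\<lambda>t. ln (x t b) - ln (x t (b - 1))) has_real_derivative axf ex (y t) b - axf ex (y t) (b - 1)) (at t)"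
      using drx[OF t0(1)] by simp
    have "axf ex (y t) b - axf ex (y t) (b - 1) = 2 * y t (b + 1) - (1 - ex) * y t b - (1 + ex) * y t (b - 1)"
      unfolding axf_b(2,3) unfolding axf_b(1) by (simp add: algebra_simps)
    moreover have "2 * y t (b + 1) - (1 - ex) * y t b - (1 + ex) * y t (b - 1) \<ge> m / 8"
      by (rule ineqS) (use m d posy[OF t0(2)] sy[OF t0(2), of b] ysm vu \<open>s < t\<close> in auto)
    ultimately show "axf ex (y t) b - axf ex (y t) (b - 1) \<ge> m / 8" by simp
  next
    fix t assume "s \<le> t"
    then have t0: "t \<ge> 0" using s0 by auto
    have "x t b \<le> 1" using sx[OF t0, of b] posx[OF t0, of "b + 1"] posx[OF t0, of "b - 1"] by linarith
    then have "ln (x t b) \<le> 0" using posx[OF t0] by simp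
    moreover have "ln (x t (b - 1)) \<ge> ln (1/2)" using xm[OF \<open>s \<le> t\<close>] by (intro ln_mono) auto
    moreover have "ln (1/2::real) = - ln 2" by (simp add: ln_div)
    ultimately show "ln (x t b) - ln (x t (b - 1)) \<le> ln 2" by linarith
  qed
qed

lemma main:
  assumes s0: "s \<ge> 0" and E: "x s b < d" "x s (b + 1) < d" "y s (b - 1) < d"
    and h: "\<bar>y s b - 1/2\<bar> \<le> d" "\<bar>y s (b + 1) - 1/2\<bar> \<le> d"
    and t0: "0 \<le> t0" "t0 \<le> s" "x t0 (b - 1) \<le> 1/2"
  shows False
proof -
  have xs: "x s (b - 1) > 1 - 2 * d" using sx[OF s0, of b] E by linarith
  have cf: "continuous_on {a..c} (\<lambda>t. x t (b - 1))" if "0 \<le> a" for a c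
    by (rule continuous_on_subset[OF contx]) (use that in auto)
  obtain t1 where t1: "t0 \<le> t1" "t1 < s" "x t1 (b - 1) = 1/2" "\<forall>t. t1 < t \<and> t \<le> s \<longrightarrow> x t (b - 1) > 1/2"
    using H2[OF t0(2) cf[OF t0(1)], of "1/2"] t0 xs ex1 by auto
  obtain t2' where t2': "t2' > s" "x t2' (b - 1) \<le> 1/2" using step3[OF s0 E h] by blast
  obtain t2 where t2: "s < t2" "t2 \<le> t2'" "x t2 (b - 1) = 1/2" "\<forall>t. s \<le> t \<and> t < t2 \<longrightarrow> x t (b - 1) > 1/2"
    using H3[of s t2' "\<lambda>t. x t (b - 1)" "1/2"] cf[OF s0] t2' xs ex1 by auto
  have t1p: "t1 \<ge> 0" using t1 t0 by simp
  have xm: "x t (b - 1) \<ge> 1/2" if "t1 \<le> t" "t \<le> t2" for t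
  proof (cases "t \<le> s")
    case True then show ?thesis using t1(4)[rule_format, of t] t1(3) that by (cases "t = t1") auto
  next
    case False then show ?thesis using t2(4)[rule_format, of t] t2(3) that by (cases "t = t2") auto
  qed
  have ysm: "y t (b - 1) < d" if "t1 \<le> t" "t \<le> t2" for t
  proof -
    have tt: "t \<ge> 0" using that t1p by simp
    have "y t (b - 1) < 1/2"
    proof (cases "t \<le> s")
      case True
      have "y t (b - 1) < 1/2 \<longleftrightarrow> y s (b - 1) < 1/2"
        by (rule ysmall_between[OF tt True]) (use xm that t2 in auto)
      then show ?thesis using E ex1 by auto
    next
      case False
      have "y s (b - 1) < 1/2 \<longleftrightarrow> y t (b - 1) < 1/2"
        by (rule ysmall_between[OF s0]) (use xm that t1 False in auto)
      then show ?thesis using E ex1 by auto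
    qed
    then show ?thesis using comp[OF tt, of b] xm[OF that] ex1 by auto
  qed
  have R1: "ln (y s (b + 1)) - ln (y s b) \<ge> ln (y t1 (b + 1)) - ln (y t1 b)"
    by (rule Rmono[OF t1p]) (use t1 xm t2 in auto)
  have R2: "ln (y t2 (b + 1)) - ln (y t2 b) \<ge> ln (y s (b + 1)) - ln (y s b)"
    by (rule Rmono[OF s0]) (use t1 xm t2 in auto)
  have t2p: "t2 \<ge> 0" using t2 s0 by simp
  have ln2: "ln (2::real) < ln 4" by simp
  have c1: "x t1 (b + 1) < d"
  proof -
    have "(x t1 (b + 1) < d \<and> y t1 (b + 1) < d) \<or> (x t1 b < d \<and> y t1 b < d)"
      by (rule at_half[OF t1p t1(3) ysm]) (use t1 t2 in auto)
    moreover have "\<not> (x t1 b < d \<and> y t1 b < d)"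
    proof
      assume a: "x t1 b < d \<and> y t1 b < d"
      have "y t1 (b + 1) > 4 * y t1 b" using a sy[OF t1p, of b] ysm[of t1] t1 t2 ex1 by auto
      then have "ln (y t1 (b + 1)) > ln (4 * y t1 b)" using posy[OF t1p, of b] by (intro ln_less_cancel_iff[THEN iffD2]) auto
      moreover have "ln (4 * y t1 b) = ln 4 + ln (y t1 b)" using posy[OF t1p, of b] by (simp add: ln_mult)
      moreover have "y s (b + 1) < 2 * y s b" using h ex1 by auto
      then have "ln (y s (b + 1)) < ln (2 * y s b)" using posy[OF s0, of "b + 1"] by (intro ln_less_cancel_iff[THEN iffD2]) auto
      moreover have "ln (2 * y s b) = ln 2 + ln (y s b)" using posy[OF s0, of b] by (simp add: ln_mult)
      ultimately show False using R1 ln2 by linarith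
    qed
    ultimately show ?thesis by auto
  qed
  have c2: "x t2 b < d"
  proof -
    have "(x t2 (b + 1) < d \<and> y t2 (b + 1) < d) \<or> (x t2 b < d \<and> y t2 b < d)"
      by (rule at_half[OF t2p t2(3) ysm]) (use t1 t2 in auto)
    moreover have "\<not> (x t2 (b + 1) < d \<and> y t2 (b + 1) < d)"
    proof
      assume a: "x t2 (b + 1) < d \<and> y t2 (b + 1) < d"
      have "y t2 b > 4 * y t2 (b + 1)" using a sy[OF t2p, of b] ysm[of t2] t1 t2 ex1 by auto
      then have "ln (y t2 b) > ln (4 * y t2 (b + 1))" using posy[OF t2p, of "b + 1"] by (intro ln_less_cancel_iff[THEN iffD2]) auto
      moreover have "ln (4 * y t2 (b + 1)) = ln 4 + ln (y t2 (b + 1))" using posy[OF t2p, of "b + 1"] by (simp add: ln_mult)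
      moreover have "y s b < 2 * y s (b + 1)" using h ex1 by auto
      then have "ln (y s b) < ln (2 * y s (b + 1))" using posy[OF s0, of b] by (intro ln_less_cancel_iff[THEN iffD2]) auto
      moreover have "ln (2 * y s (b + 1)) = ln 2 + ln (y s (b + 1))" using posy[OF s0, of "b + 1"] by (simp add: ln_mult)
      ultimately show False using R2 ln2 by linarith
    qed
    ultimately show ?thesis by auto
  qed
  have t12: "t1 \<le> t2" using t1 t2 by simp
  have "(ln (x t2 b) - ln (x t2 (b + 1))) - (ln (x t1 b) - ln (x t1 (b + 1))) \<ge> 0 * (t2 - t1)"
  proof (rule H1[OF t12, where f' = "\<lambda>t. axf ex (y t) b - axf ex (y t) (b + 1)"])
    show "continuous_on {t1..t2} (\<lambda>t. ln (x t b) - ln (x t (b + 1)))"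
      by (intro continuous_on_diff; rule continuous_on_subset[OF lncx]) (use t1p in auto)
    fix t assume t: "t1 < t" "t < t2"
    then have tt: "t > 0" "t \<ge> 0" using t1p by auto
    show "((\<lambda>t. ln (x t b) - ln (x t (b + 1))) has_real_derivative
        axf ex (y t) b - axf ex (y t) (b + 1)) (at t)" using drx[OF tt(1)] by simp
    have "axf ex (y t) b - axf ex (y t) (b + 1) = (1 + ex) * y t b + (1 - ex) * y t (b + 1) - 2 * y t (b - 1)"
      unfolding axf_b(2,3) unfolding axf_b(1) by (simp add: algebra_simps)
    moreover have "(1 + ex) * y t b + (1 - ex) * y t (b + 1) - 2 * y t (b - 1) \<ge> 0"
      by (rule ineqW) (use m d posy[OF tt(2)] sy[OF tt(2), of b] ysm t in auto)
    ultimately show "0 \<le> axf ex (y t) b - axf ex (y t) (b + 1)" by simp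
  qed
  moreover have "ln (x t1 b) - ln (x t1 (b + 1)) > 0"
  proof -
    have "x t1 b > x t1 (b + 1)" using sx[OF t1p, of b] t1(3) c1 ex1 by linarith
    then show ?thesis using posx[OF t1p] by simp
  qed
  moreover have "ln (x t2 b) - ln (x t2 (b + 1)) < 0"
  proof -
    have "x t2 b < x t2 (b + 1)" using sx[OF t2p, of b] t2(3) c2 ex1 by linarith
    then show ?thesis using posx[OF t2p] by simp
  qed
  ultimately show False by linarith
qed

lemma orb_False: False
proof -
  obtain s0 b0 where A: "s0 \<ge> 0" "x s0 b0 < d" "x s0 (b0 + 1) < d" "y s0 (b0 - 1) < d"
    "\<bar>y s0 b0 - 1/2\<bar> \<le> d" "\<bar>y s0 (b0 + 1) - 1/2\<bar> \<le> d" using step1[of 0] by auto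
  obtain t2 where t2: "t2 > s0" "x t2 (b0 - 1) \<le> 1/2" using step3[OF A] by blast
  obtain s b where B: "s \<ge> t2" "x s b < d" "x s (b + 1) < d" "y s (b - 1) < d"
    "\<bar>y s b - 1/2\<bar> \<le> d" "\<bar>y s (b + 1) - 1/2\<bar> \<le> d" using step1[of t2] t2 A by auto
  have sp: "s \<ge> 0" using B t2 A by simp
  show False
  proof (cases "b = b0")
    case True
    show False by (rule main[OF sp B(2-6), of t2]) (use t2 A B True in auto)
  next
    case False
    then have "b - 1 \<noteq> b0 - 1" by simp
    then have "b - 1 = b0 \<or> b - 1 = b0 + 1" using three[of "b - 1" b0] by auto
    then have "x s0 (b - 1) < d"
    proof
      assume h: "b - 1 = b0"
      have "x s0 (b - 1) = x s0 b0" by (simp only: h)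
      then show ?thesis using A(2) by simp
    next
      assume h: "b - 1 = b0 + 1"
      have "x s0 (b - 1) = x s0 (b0 + 1)" by (simp only: h)
      then show ?thesis using A(3) by simp
    qed
    then have "x s0 (b - 1) \<le> 1/2" using ex1 d by simp
    show False by (rule main[OF sp B(2-6), of s0]) (use t2 A B \<open>x s0 (b - 1) \<le> 1/2\<close> in auto)
  qed
qed

end

lemma idxc: "(R::3) + 1 = S" "(S::3) + 1 = P" "(P::3) + 1 = R" "(R::3) - 1 = P" "(S::3) - 1 = R" "(P::3) - 1 = S"
  by simp_all

lemma mv: "(rsp_matrix e *v v) $ i = axf e (\<lambda>j. v $ j) i"
proof -
  have "(rsp_matrix e *v v) $ i = (\<Sum>j\<in>UNIV. rsp_matrix e $ i $ j * v $ j)"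
    by (simp add: matrix_vector_mult_def)
  also have "\<dots> = rsp_matrix e $ i $ i * v $ i + rsp_matrix e $ i $ (i + 1) * v $ (i + 1)
     + rsp_matrix e $ i $ (i - 1) * v $ (i - 1)" by (rule sum3)
  also have "\<dots> = axf e (\<lambda>j. v $ j) i"
  proof -
    consider "i = R" | "i = S" | "i = P" using exhaust_3[of i] by blast
    then show ?thesis
    proof cases
      case 1 then show ?thesis unfolding axf_def by (simp only: idxc) (simp add: rsp_matrix_def algebra_simps)
    next
      case 2 then show ?thesis unfolding axf_def by (simp only: idxc) (simp add: rsp_matrix_def algebra_simps)
    next
      case 3 then show ?thesis unfolding axf_def by (simp only: idxc) (simp add: rsp_matrix_def algebra_simps)
    qed
  qed
  finally show ?thesis .
qed

lemma field_x: "fst (repl_field ex ey z) $ i =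
   fst z $ i * (axf ex (\<lambda>j. snd z $ j) i - (\<Sum>k\<in>UNIV. fst z $ k * axf ex (\<lambda>j. snd z $ j) k))"
  by (simp add: repl_field_def Let_def mv inner_vec_def)

lemma field_y: "snd (repl_field ex ey z) $ i =
   snd z $ i * (axf ey (\<lambda>j. fst z $ j) i - (\<Sum>k\<in>UNIV. snd z $ k * axf ey (\<lambda>j. fst z $ j) k))"
  by (simp add: repl_field_def Let_def mv inner_vec_def)

lemma traj_cont: "is_traj ex ey \<phi> \<Longrightarrow> continuous_on {0..} \<phi>"
  unfolding is_traj_def continuous_on_eq_continuous_within
  by (auto intro: has_vector_derivative_continuous)

lemma traj_dx: "is_traj ex ey \<phi> \<Longrightarrow> t \<ge> 0 \<Longrightarrow>
   ((\<lambda>s. fst (\<phi> s) $ i) has_real_derivative (fst (repl_field ex ey (\<phi> t)) $ i)) (at t within {0..})"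
  unfolding has_real_derivative_iff_has_vector_derivative is_traj_def
  by (rule bounded_linear.has_vector_derivative[of "\<lambda>z. fst z $ i", OF
        bounded_linear_compose[OF bounded_linear_vec_nth bounded_linear_fst]]) auto

lemma traj_dy: "is_traj ex ey \<phi> \<Longrightarrow> t \<ge> 0 \<Longrightarrow>
   ((\<lambda>s. snd (\<phi> s) $ i) has_real_derivative (snd (repl_field ex ey (\<phi> t)) $ i)) (at t within {0..})"
  unfolding has_real_derivative_iff_has_vector_derivative is_traj_def
  by (rule bounded_linear.has_vector_derivative[of "\<lambda>z. snd z $ i", OF
        bounded_linear_compose[OF bounded_linear_vec_nth bounded_linear_snd]]) auto

lemma lin_ode:
  fixes f g :: "real \<Rightarrow> real"
  assumes df: "\<And>t. t \<ge> 0 \<Longrightarrow> (f has_real_derivative f t * g t) (at t within {0..})"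
    and cg: "continuous_on {0..} g" and T: "T \<ge> 0"
  shows "f T = f 0 * exp (integral {0..T} g)"
proof -
  define G where "G t = integral {0..t} g" for t
  have cgT: "continuous_on {0..T} g" by (rule continuous_on_subset[OF cg]) auto
  have dG: "(G has_real_derivative g t) (at t within {0..T})" if "t \<in> {0..T}" for t
    unfolding G_def has_real_derivative_iff_has_vector_derivative
    by (rule integral_has_vector_derivative[OF cgT that])
  have dh: "((\<lambda>t. f t * exp (- G t)) has_real_derivative 0) (at t within {0..T})" if t: "t \<in> {0..T}" for t
  proof -
    have d1: "(f has_real_derivative f t * g t) (at t within {0..T})"
      by (rule DERIV_subset[OF df]) (use t in auto)
    have "((\<lambda>t. - G t) has_real_derivative - g t) (at t within {0..T})"
      by (rule DERIV_minus[OF dG[OF t]])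
    then have d2: "((\<lambda>t. exp (- G t)) has_real_derivative exp (- G t) * - g t) (at t within {0..T})"
      by (rule DERIV_chain2[OF DERIV_exp])
    note DERIV_mult[OF d1 d2]
    then show ?thesis by (simp add: algebra_simps)
  qed
  obtain c where c: "\<forall>t\<in>{0..T}. f t * exp (- G t) = c"
    using has_field_derivative_zero_constant[OF convex_real_interval(5) dh] by blast
  have "f T * exp (- G T) = f 0 * exp (- G 0)" using c T by auto
  moreover have "G 0 = 0" unfolding G_def by simp
  ultimately have "f T = f 0 * exp (G T)"
    by (simp add: exp_minus field_simps)
  then show ?thesis unfolding G_def .
qed

lemma traj_cx: "is_traj ex ey \<phi> \<Longrightarrow> continuous_on {0..} (\<lambda>t. fst (\<phi> t) $ i)"
  by (intro continuous_intros traj_cont)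
lemma traj_cy: "is_traj ex ey \<phi> \<Longrightarrow> continuous_on {0..} (\<lambda>t. snd (\<phi> t) $ i)"
  by (intro continuous_intros traj_cont)

lemma traj_posx:
  assumes tr: "is_traj ex ey \<phi>" and p: "fst (\<phi> 0) $ i > 0" and T: "T \<ge> 0"
  shows "fst (\<phi> T) $ i > 0"
proof -
  let ?g = "\<lambda>t. axf ex (\<lambda>j. snd (\<phi> t) $ j) i - (\<Sum>k\<in>UNIV. fst (\<phi> t) $ k * axf ex (\<lambda>j. snd (\<phi> t) $ j) k)"
  have "fst (\<phi> T) $ i = fst (\<phi> 0) $ i * exp (integral {0..T} ?g)"
  proof (rule lin_ode[OF _ _ T])
    fix t :: real assume "t \<ge> 0"
    show "((\<lambda>t. fst (\<phi> t) $ i) has_real_derivative fst (\<phi> t) $ i * ?g t) (at t within {0..})"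
      using traj_dx[OF tr \<open>t \<ge> 0\<close>, of i] unfolding field_x .
  next
    show "continuous_on {0..} ?g" unfolding axf_def
      by (intro continuous_intros traj_cx[OF tr] traj_cy[OF tr])
  qed
  then show ?thesis using p by simp
qed

lemma traj_posy:
  assumes tr: "is_traj ex ey \<phi>" and p: "snd (\<phi> 0) $ i > 0" and T: "T \<ge> 0"
  shows "snd (\<phi> T) $ i > 0"
proof -
  let ?g = "\<lambda>t. axf ey (\<lambda>j. fst (\<phi> t) $ j) i - (\<Sum>k\<in>UNIV. snd (\<phi> t) $ k * axf ey (\<lambda>j. fst (\<phi> t) $ j) k)"
  have "snd (\<phi> T) $ i = snd (\<phi> 0) $ i * exp (integral {0..T} ?g)"
  proof (rule lin_ode[OF _ _ T])
    fix t :: real assume "t \<ge> 0"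
    show "((\<lambda>t. snd (\<phi> t) $ i) has_real_derivative snd (\<phi> t) $ i * ?g t) (at t within {0..})"
      using traj_dy[OF tr \<open>t \<ge> 0\<close>, of i] unfolding field_y .
  next
    show "continuous_on {0..} ?g" unfolding axf_def
      by (intro continuous_intros traj_cx[OF tr] traj_cy[OF tr])
  qed
  then show ?thesis using p by simp
qed

lemma sum_alg: fixes X a :: "3 \<Rightarrow> real" shows
  "(\<Sum>i\<in>UNIV. X i * (a i - (\<Sum>k\<in>UNIV. X k * a k))) = (1 - (\<Sum>i\<in>UNIV. X i)) * (\<Sum>k\<in>UNIV. X k * a k)"
proof -
  define c where "c = (\<Sum>k\<in>UNIV. X k * a k)"
  have "(\<Sum>i\<in>UNIV. X i * (a i - c)) = (\<Sum>i\<in>UNIV. X i * a i) - (\<Sum>i\<in>UNIV. X i) * c"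
    by (simp add: right_diff_distrib sum_subtractf sum_distrib_right)
  then show ?thesis unfolding c_def[symmetric] by (simp add: c_def algebra_simps)
qed

lemma traj_sumx:
  assumes tr: "is_traj ex ey \<phi>" and p: "(\<Sum>i\<in>UNIV. fst (\<phi> 0) $ i) = 1" and T: "T \<ge> 0"
  shows "(\<Sum>i\<in>UNIV. fst (\<phi> T) $ i) = 1"
proof -
  let ?g = "\<lambda>t. - (\<Sum>k\<in>UNIV. fst (\<phi> t) $ k * axf ex (\<lambda>j. snd (\<phi> t) $ j) k)"
  have "(1 - (\<Sum>i\<in>UNIV. fst (\<phi> T) $ i)) = (1 - (\<Sum>i\<in>UNIV. fst (\<phi> 0) $ i)) * exp (integral {0..T} ?g)"
  proof (rule lin_ode[OF _ _ T, where f = "\<lambda>t. 1 - (\<Sum>i\<in>UNIV. fst (\<phi> t) $ i)"])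
    fix t :: real assume "t \<ge> 0"
    have "((\<lambda>t. \<Sum>i\<in>UNIV. fst (\<phi> t) $ i) has_real_derivative
       (\<Sum>i\<in>UNIV. fst (repl_field ex ey (\<phi> t)) $ i)) (at t within {0..})"
      by (intro DERIV_sum traj_dx[OF tr \<open>t \<ge> 0\<close>])
    note dS = this
    have "((\<lambda>t. 1 - (\<Sum>i\<in>UNIV. fst (\<phi> t) $ i)) has_real_derivative
       - (\<Sum>i\<in>UNIV. fst (repl_field ex ey (\<phi> t)) $ i)) (at t within {0..})"
      using DERIV_diff[OF DERIV_const[of 1] dS] by simp
    moreover have "- (\<Sum>i\<in>UNIV. fst (repl_field ex ey (\<phi> t)) $ i) = (1 - (\<Sum>i\<in>UNIV. fst (\<phi> t) $ i)) * ?g t"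
      unfolding field_x sum_alg by simp
    ultimately show "((\<lambda>t. 1 - (\<Sum>i\<in>UNIV. fst (\<phi> t) $ i)) has_real_derivative
       (1 - (\<Sum>i\<in>UNIV. fst (\<phi> t) $ i)) * ?g t) (at t within {0..})" by simp
  next
    show "continuous_on {0..} ?g" unfolding axf_def
      by (intro continuous_intros traj_cx[OF tr] traj_cy[OF tr])
  qed
  then show ?thesis using p by simp
qed

lemma traj_sumy:
  assumes tr: "is_traj ex ey \<phi>" and p: "(\<Sum>i\<in>UNIV. snd (\<phi> 0) $ i) = 1" and T: "T \<ge> 0"
  shows "(\<Sum>i\<in>UNIV. snd (\<phi> T) $ i) = 1"
proof -
  let ?g = "\<lambda>t. - (\<Sum>k\<in>UNIV. snd (\<phi> t) $ k * axf ey (\<lambda>j. fst (\<phi> t) $ j) k)"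
  have "(1 - (\<Sum>i\<in>UNIV. snd (\<phi> T) $ i)) = (1 - (\<Sum>i\<in>UNIV. snd (\<phi> 0) $ i)) * exp (integral {0..T} ?g)"
  proof (rule lin_ode[OF _ _ T, where f = "\<lambda>t. 1 - (\<Sum>i\<in>UNIV. snd (\<phi> t) $ i)"])
    fix t :: real assume "t \<ge> 0"
    have "((\<lambda>t. \<Sum>i\<in>UNIV. snd (\<phi> t) $ i) has_real_derivative
       (\<Sum>i\<in>UNIV. snd (repl_field ex ey (\<phi> t)) $ i)) (at t within {0..})"
      by (intro DERIV_sum traj_dy[OF tr \<open>t \<ge> 0\<close>])
    note dS = this
    have "((\<lambda>t. 1 - (\<Sum>i\<in>UNIV. snd (\<phi> t) $ i)) has_real_derivative
       - (\<Sum>i\<in>UNIV. snd (repl_field ex ey (\<phi> t)) $ i)) (at t within {0..})"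
      using DERIV_diff[OF DERIV_const[of 1] dS] by simp
    moreover have "- (\<Sum>i\<in>UNIV. snd (repl_field ex ey (\<phi> t)) $ i) = (1 - (\<Sum>i\<in>UNIV. snd (\<phi> t) $ i)) * ?g t"
      unfolding field_y sum_alg by simp
    ultimately show "((\<lambda>t. 1 - (\<Sum>i\<in>UNIV. snd (\<phi> t) $ i)) has_real_derivative
       (1 - (\<Sum>i\<in>UNIV. snd (\<phi> t) $ i)) * ?g t) (at t within {0..})" by simp
  next
    show "continuous_on {0..} ?g" unfolding axf_def
      by (intro continuous_intros traj_cx[OF tr] traj_cy[OF tr])
  qed
  then show ?thesis using p by simp
qed

lemma at_pos: "(t::real) > 0 \<Longrightarrow> at t within {0..} = at t"
  by (rule at_within_open_subset[of t "{0<..}"]) auto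

lemma traj_lx:
  assumes tr: "is_traj ex ey \<phi>" and pos: "fst (\<phi> t) $ i > 0" and t: "t > 0"
  shows "((\<lambda>s. ln (fst (\<phi> s) $ i)) has_real_derivative
     (axf ex (\<lambda>j. snd (\<phi> t) $ j) i - (\<Sum>k\<in>UNIV. fst (\<phi> t) $ k * axf ex (\<lambda>j. snd (\<phi> t) $ j) k))) (at t)"
proof -
  have "((\<lambda>s. fst (\<phi> s) $ i) has_real_derivative fst (repl_field ex ey (\<phi> t)) $ i) (at t)"
    using traj_dx[OF tr, of t i] t at_pos[OF t] by simp
  note dd = DERIV_chain2[OF DERIV_ln[OF pos] this]
  have e: "inverse (fst (\<phi> t) $ i) * (fst (\<phi> t) $ i * A) = A" for A
    using pos by simp
  show ?thesis using dd unfolding field_x by (simp add: e)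
qed

lemma traj_ly:
  assumes tr: "is_traj ex ey \<phi>" and pos: "snd (\<phi> t) $ i > 0" and t: "t > 0"
  shows "((\<lambda>s. ln (snd (\<phi> s) $ i)) has_real_derivative
     (axf ey (\<lambda>j. fst (\<phi> t) $ j) i - (\<Sum>k\<in>UNIV. snd (\<phi> t) $ k * axf ey (\<lambda>j. fst (\<phi> t) $ j) k))) (at t)"
proof -
  have "((\<lambda>s. snd (\<phi> s) $ i) has_real_derivative snd (repl_field ex ey (\<phi> t)) $ i) (at t)"
    using traj_dy[OF tr, of t i] t at_pos[OF t] by simp
  note dd = DERIV_chain2[OF DERIV_ln[OF pos] this]
  have e: "inverse (snd (\<phi> t) $ i) * (snd (\<phi> t) $ i * A) = A" for A
    using pos by simp
  show ?thesis using dd unfolding field_y by (simp add: e)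
qed

definition etype :: "state \<Rightarrow> state \<Rightarrow> bool" where
  "etype v w \<longleftrightarrow> (\<exists>b. (v, w) = (vtx (b + 1) b, vtx b b) \<or> (v, w) = (vtx b b, vtx (b - 1) b)
      \<or> (v, w) = (vtx (b - 1) b, vtx (b - 1) (b + 1)))"

lemma three0: "(3::3) = 0" "- (1::3) = 2" by simp_all

lemma C4_edge_type: "(v, w) \<in> C4_edges \<Longrightarrow> etype v w"
proof -
  assume "(v, w) \<in> C4_edges"
  then obtain k where k: "k < 9" "v = vtx (fst (C4_vertices ! k)) (snd (C4_vertices ! k))"
    "w = vtx (fst (C4_vertices ! ((k + 1) mod 9))) (snd (C4_vertices ! ((k + 1) mod 9)))"
    unfolding C4_edges_def by blast
  have "k = 0 \<or> k = 1 \<or> k = 2 \<or> k = 3 \<or> k = 4 \<or> k = 5 \<or> k = 6 \<or> k = 7 \<or> k = 8" using k(1) by arith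
  then show ?thesis
  proof (elim disjE)
    assume "k = 0" then show ?thesis using k unfolding etype_def C4_vertices_def
      by (intro exI[of _ R]) (simp add: idxc three0)
  next
    assume "k = 1" then show ?thesis using k unfolding etype_def C4_vertices_def
      by (intro exI[of _ R]) (simp add: idxc three0)
  next
    assume "k = 2" then show ?thesis using k unfolding etype_def C4_vertices_def
      by (intro exI[of _ R]) (simp add: idxc three0)
  next
    assume "k = 3" then show ?thesis using k unfolding etype_def C4_vertices_def
      by (intro exI[of _ S]) (simp add: idxc three0)
  next
    assume "k = 4" then show ?thesis using k unfolding etype_def C4_vertices_def
      by (intro exI[of _ S]) (simp add: idxc three0)
  next
    assume "k = 5" then show ?thesis using k unfolding etype_def C4_vertices_def
      by (intro exI[of _ S]) (simp add: idxc three0)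
  next
    assume "k = 6" then show ?thesis using k unfolding etype_def C4_vertices_def
      by (intro exI[of _ P]) (simp add: idxc three0)
  next
    assume "k = 7" then show ?thesis using k unfolding etype_def C4_vertices_def
      by (intro exI[of _ P]) (simp add: idxc three0)
  next
    assume "k = 8" then show ?thesis using k unfolding etype_def C4_vertices_def
      by (intro exI[of _ P]) (simp add: idxc three0)
  qed
qed

lemma seg_zero_fst: "w \<in> closed_segment v v' \<Longrightarrow> fst v $ i = 0 \<Longrightarrow> fst v' $ i = 0 \<Longrightarrow> fst w $ i = 0"
  unfolding closed_segment_def by auto
lemma seg_zero_snd: "w \<in> closed_segment v v' \<Longrightarrow> snd v $ i = 0 \<Longrightarrow> snd v' $ i = 0 \<Longrightarrow> snd w $ i = 0"
  unfolding closed_segment_def by auto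

lemma small_fst: "dist z w < d \<Longrightarrow> fst w $ i = 0 \<Longrightarrow> fst z $ i < d"
proof -
  assume a: "dist z w < d" "fst w $ i = 0"
  have "\<bar>fst z $ i - fst w $ i\<bar> \<le> dist (fst z) (fst w)"
    using dist_vec_nth_le[where x="fst z" and y="fst w" and i=i] by (simp add: dist_real_def)
  also have "\<dots> \<le> dist z w" by (rule dist_fst_le)
  finally show ?thesis using a by simp
qed
lemma small_snd: "dist z w < d \<Longrightarrow> snd w $ i = 0 \<Longrightarrow> snd z $ i < d"
proof -
  assume a: "dist z w < d" "snd w $ i = 0"
  have "\<bar>snd z $ i - snd w $ i\<bar> \<le> dist (snd z) (snd w)"
    using dist_vec_nth_le[where x="snd z" and y="snd w" and i=i] by (simp add: dist_real_def)
  also have "\<dots> \<le> dist z w" by (rule dist_snd_le)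
  finally show ?thesis using a by simp
qed

lemma vtx_c: "fst (vtx a b) $ i = (if i = a then 1 else 0)" "snd (vtx a b) $ i = (if i = b then 1 else 0)"
  unfolding vtx_def by (auto simp: axis_def)

lemma near_C4:
  assumes "infdist z C4 < d"
  shows "\<exists>b. (fst z $ (b - 1) < d \<and> snd z $ (b + 1) < d \<and> snd z $ (b - 1) < d) \<or>
       (fst z $ (b + 1) < d \<and> snd z $ (b + 1) < d \<and> snd z $ (b - 1) < d) \<or>
       (fst z $ b < d \<and> fst z $ (b + 1) < d \<and> snd z $ (b - 1) < d)"
proof -
  have ne: "C4 \<noteq> {}"
  proof -
    have "(vtx S R, vtx R R) \<in> C4_edges" unfolding C4_edges_def C4_vertices_def
      by (rule CollectI, rule exI[of _ 0]) simp
    moreover have "vtx S R \<in> closed_segment (vtx S R) (vtx R R)" by (rule ends_in_segment)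
    ultimately have "vtx S R \<in> C4" unfolding C4_def by (intro UN_I[where a="(vtx S R, vtx R R)"]) simp_all
    then show ?thesis by (metis empty_iff)
  qed
  have "(INF a\<in>C4. dist z a) < d" using assms infdist_notempty[OF ne] by simp
  moreover have bdd: "bdd_below ((\<lambda>a. dist z a) ` C4)" by (rule bdd_belowI2[of _ 0]) simp
  ultimately obtain w where w: "w \<in> C4" "dist z w < d"
    using cINF_less_iff[OF ne bdd] by blast
  then obtain v v' where vv: "(v, v') \<in> C4_edges" "w \<in> closed_segment v v'" unfolding C4_def by auto
  obtain b where b: "(v, v') = (vtx (b + 1) b, vtx b b) \<or> (v, v') = (vtx b b, vtx (b - 1) b)
      \<or> (v, v') = (vtx (b - 1) b, vtx (b - 1) (b + 1))" using C4_edge_type[OF vv(1)] unfolding etype_def by blast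
  note I = idx3[of b]
  from b show ?thesis
  proof (elim disjE)
    assume e: "(v, v') = (vtx (b + 1) b, vtx b b)"
    have "fst w $ (b - 1) = 0" by (rule seg_zero_fst[OF vv(2)]) (use e I in \<open>simp_all add: vtx_c\<close>)
    moreover have "snd w $ (b + 1) = 0" by (rule seg_zero_snd[OF vv(2)]) (use e I in \<open>simp_all add: vtx_c\<close>)
    moreover have "snd w $ (b - 1) = 0" by (rule seg_zero_snd[OF vv(2)]) (use e I in \<open>simp_all add: vtx_c\<close>)
    ultimately show ?thesis using small_fst[OF w(2)] small_snd[OF w(2)] by blast
  next
    assume e: "(v, v') = (vtx b b, vtx (b - 1) b)"
    have "fst w $ (b + 1) = 0" by (rule seg_zero_fst[OF vv(2)]) (use e I in \<open>simp_all add: vtx_c\<close>)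
    moreover have "snd w $ (b + 1) = 0" by (rule seg_zero_snd[OF vv(2)]) (use e I in \<open>simp_all add: vtx_c\<close>)
    moreover have "snd w $ (b - 1) = 0" by (rule seg_zero_snd[OF vv(2)]) (use e I in \<open>simp_all add: vtx_c\<close>)
    ultimately show ?thesis using small_fst[OF w(2)] small_snd[OF w(2)] by blast
  next
    assume e: "(v, v') = (vtx (b - 1) b, vtx (b - 1) (b + 1))"
    have "fst w $ b = 0" by (rule seg_zero_fst[OF vv(2)]) (use e I in \<open>simp_all add: vtx_c\<close>)
    moreover have "fst w $ (b + 1) = 0" by (rule seg_zero_fst[OF vv(2)]) (use e I in \<open>simp_all add: vtx_c\<close>)
    moreover have "snd w $ (b - 1) = 0" by (rule seg_zero_snd[OF vv(2)]) (use e I in \<open>simp_all add: vtx_c\<close>)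
    ultimately show ?thesis using small_fst[OF w(2)] small_snd[OF w(2)] by blast
  qed
qed

lemma interior_not_in_basin:
  assumes ex: "\<bar>ex\<bar> < 1" and ey: "\<bar>ey\<bar> < 1" and d: "0 < d" "d \<le> min (1 - \<bar>ex\<bar>) (1 - \<bar>ey\<bar>) / 64"
    and p: "p \<in> basin ex ey C4 d" and px: "\<forall>i. fst p $ i > 0" and py: "\<forall>i. snd p $ i > 0"
  shows False
proof -
  from p obtain \<phi> where ph: "p \<in> Delta" "\<phi> 0 = p" "is_traj ex ey \<phi>" "\<forall>t\<ge>0. \<phi> t \<in> nbhd C4 d"
    unfolding basin_def by blast
  have s0: "(\<Sum>i\<in>UNIV. fst (\<phi> 0) $ i) = 1" "(\<Sum>i\<in>UNIV. snd (\<phi> 0) $ i) = 1"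
    using ph(1,2) unfolding Delta_def simplex3_def by auto
  interpret orb ex ey "min (1 - \<bar>ex\<bar>) (1 - \<bar>ey\<bar>)" d "\<lambda>t i. fst (\<phi> t) $ i" "\<lambda>t i. snd (\<phi> t) $ i"
  proof
    show "0 < min (1 - \<bar>ex\<bar>) (1 - \<bar>ey\<bar>)" using ex ey by simp
    show "min (1 - \<bar>ex\<bar>) (1 - \<bar>ey\<bar>) \<le> 1 - \<bar>ex\<bar>" by simp
    show "min (1 - \<bar>ex\<bar>) (1 - \<bar>ey\<bar>) \<le> 1 - \<bar>ey\<bar>" by simp
    show "0 < d" "d \<le> min (1 - \<bar>ex\<bar>) (1 - \<bar>ey\<bar>) / 64" using d by auto
    show "\<And>t i. 0 \<le> t \<Longrightarrow> 0 < fst (\<phi> t) $ i"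
      using traj_posx[OF ph(3)] px ph(2) by auto
    show "\<And>t i. 0 \<le> t \<Longrightarrow> 0 < snd (\<phi> t) $ i"
      using traj_posy[OF ph(3)] py ph(2) by auto
    show "\<And>t. 0 \<le> t \<Longrightarrow> (\<Sum>i\<in>UNIV. fst (\<phi> t) $ i) = 1"
      using traj_sumx[OF ph(3) s0(1)] by auto
    show "\<And>t. 0 \<le> t \<Longrightarrow> (\<Sum>i\<in>UNIV. snd (\<phi> t) $ i) = 1"
      using traj_sumy[OF ph(3) s0(2)] by auto
    show "\<And>i. continuous_on {0..} (\<lambda>t. fst (\<phi> t) $ i)" by (rule traj_cx[OF ph(3)])
    show "\<And>i. continuous_on {0..} (\<lambda>t. snd (\<phi> t) $ i)" by (rule traj_cy[OF ph(3)])
    show "\<And>t i. 0 < t \<Longrightarrow> ((\<lambda>s. ln (fst (\<phi> s) $ i)) has_real_derivative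
       axf ex (\<lambda>j. snd (\<phi> t) $ j) i - (\<Sum>k\<in>UNIV. fst (\<phi> t) $ k * axf ex (\<lambda>j. snd (\<phi> t) $ j) k)) (at t)"
      using traj_lx[OF ph(3)] traj_posx[OF ph(3)] px ph(2) by auto
    show "\<And>t i. 0 < t \<Longrightarrow> ((\<lambda>s. ln (snd (\<phi> s) $ i)) has_real_derivative
       axf ey (\<lambda>j. fst (\<phi> t) $ j) i - (\<Sum>k\<in>UNIV. snd (\<phi> t) $ k * axf ey (\<lambda>j. fst (\<phi> t) $ j) k)) (at t)"
      using traj_ly[OF ph(3)] traj_posy[OF ph(3)] py ph(2) by auto
    show "\<And>t. 0 \<le> t \<Longrightarrow> \<exists>b. fst (\<phi> t) $ (b - 1) < d \<and> snd (\<phi> t) $ (b + 1) < d \<and> snd (\<phi> t) $ (b - 1) < d \<or>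
      fst (\<phi> t) $ (b + 1) < d \<and> snd (\<phi> t) $ (b + 1) < d \<and> snd (\<phi> t) $ (b - 1) < d \<or>
      fst (\<phi> t) $ b < d \<and> fst (\<phi> t) $ (b + 1) < d \<and> snd (\<phi> t) $ (b - 1) < d"
      using near_C4 ph(4) unfolding nbhd_def by auto
  qed
  show False by (rule orb_False)
qed

lemma hp: "negligible {u :: real \<times> real \<times> real \<times> real. a \<bullet> u = c}" if "a \<noteq> 0" for a c
  using negligible_hyperplane that by blast

lemma boundary_negligible:
  "negligible {u :: real \<times> real \<times> real \<times> real. \<exists>i. fst (chart u) $ i = 0 \<or> snd (chart u) $ i = 0}"
proof -
  let ?H = "\<lambda>a c. {u :: real \<times> real \<times> real \<times> real. a \<bullet> u = c}"
  have sub: "{u :: real \<times> real \<times> real \<times> real. \<exists>i. fst (chart u) $ i = 0 \<or> snd (chart u) $ i = 0} \<subseteq>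
    ?H (1,0,0,0) 0 \<union> ?H (0,1,0,0) 0 \<union> ?H (1,1,0,0) 1 \<union> ?H (0,0,1,0) 0 \<union> ?H (0,0,0,1) 0 \<union> ?H (0,0,1,1) 1"
  proof
    fix u :: "real \<times> real \<times> real \<times> real"
    obtain a b c d where u: "u = (a, b, c, d)" by (cases u) auto
    assume "u \<in> {u. \<exists>i. fst (chart u) $ i = 0 \<or> snd (chart u) $ i = 0}"
    then obtain i where i: "fst (chart u) $ i = 0 \<or> snd (chart u) $ i = 0" by blast
    have "i = R \<or> i = S \<or> i = P" using exhaust_3 by blast
    then show "u \<in> ?H (1,0,0,0) 0 \<union> ?H (0,1,0,0) 0 \<union> ?H (1,1,0,0) 1 \<union> ?H (0,0,1,0) 0 \<union> ?H (0,0,0,1) 0 \<union> ?H (0,0,1,1) 1"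
      using i unfolding u by (auto simp: chart_def inner_Pair)
  qed
  show ?thesis
    by (rule negligible_subset[OF _ sub]) (intro negligible_Un; rule negligible_hyperplane; simp add: zero_prod_def)
qed

definition d0 :: "real \<Rightarrow> real \<Rightarrow> real" where
  "d0 ex ey = min (1 - \<bar>ex\<bar>) (1 - \<bar>ey\<bar>) / 64"

lemma basin_negligible:
  assumes ex: "\<bar>ex\<bar> < 1" and ey: "\<bar>ey\<bar> < 1" and d: "0 < d" "d \<le> d0 ex ey"
  shows "negligible (chart -` (basin ex ey C4 d \<inter> Delta))"
proof (rule negligible_subset[OF boundary_negligible])
  show "chart -` (basin ex ey C4 d \<inter> Delta) \<subseteq> {u. \<exists>i. fst (chart u) $ i = 0 \<or> snd (chart u) $ i = 0}"
  proof
    fix u assume u: "u \<in> chart -` (basin ex ey C4 d \<inter> Delta)"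
    then have b: "chart u \<in> basin ex ey C4 d" and D: "chart u \<in> Delta" by auto
    have nn: "\<forall>i. fst (chart u) $ i \<ge> 0" "\<forall>i. snd (chart u) $ i \<ge> 0"
      using D unfolding Delta_def simplex3_def by (auto simp: mem_Times_iff)
    have "\<not> ((\<forall>i. fst (chart u) $ i > 0) \<and> (\<forall>i. snd (chart u) $ i > 0))"
      using interior_not_in_basin[OF ex ey d(1) _ b] d(2) unfolding d0_def by blast
    then show "u \<in> {u. \<exists>i. fst (chart u) $ i = 0 \<or> snd (chart u) $ i = 0}"
      using nn by (auto simp: order.strict_iff_order)
  qed
qed

lemma Sigma_zero:
  assumes ex: "\<bar>ex\<bar> < 1" and ey: "\<bar>ey\<bar> < 1" and d: "0 < d" "d \<le> d0 ex ey"
  shows "Sigma_ratio ex ey C4 x e d = 0"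
proof -
  have "negligible (chart -` (ball x e \<inter> basin ex ey C4 d \<inter> Delta))"
    by (rule negligible_subset[OF basin_negligible[OF ex ey d]]) auto
  then have "ell (ball x e \<inter> basin ex ey C4 d) = 0"
    unfolding ell_def negligible_iff_null_sets by (rule measure_eq_0_null_sets)
  then show ?thesis unfolding Sigma_ratio_def by simp
qed

theorem mainTheorem5:
  fixes ex ey :: real
  assumes "-1 < ex" "ex < 1" "-1 < ey" "ey < 1"
  shows "(\<forall>x\<in>C4_connections. stability_index_is ex ey C4 x (-\<infinity>))
         \<and> completely_unstable ex ey C4"
proof -
  have ex: "\<bar>ex\<bar> < 1" and ey: "\<bar>ey\<bar> < 1" using assms by auto
  have d0p: "d0 ex ey > 0" using ex ey unfolding d0_def by simp
  have ev: "\<forall>\<^sub>F d in at_right 0. 0 < d \<and> d \<le> d0 ex ey"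
    by (rule eventually_mono[OF eventually_at_right_real[OF d0p]]) auto
  have nt: "\<not> (\<forall>\<^sub>F e in at_right (0::real). False)"
    using trivial_limit_at_right_real[of 0] by (simp add: trivial_limit_def)
  have SP: "sigma_plus_is ex ey C4 x 0" for x
    unfolding sigma_plus_is_def iter_index_is_def
  proof (intro exI[of _ "\<lambda>d. 0"] conjI)
    show "\<forall>\<^sub>F d in at_right 0. (if \<forall>\<^sub>F e in at_right 0. 1 - Sigma_ratio ex ey C4 x e d = 0 then (0::ereal) = \<infinity>
       else ((\<lambda>e. ereal (ln (1 - Sigma_ratio ex ey C4 x e d) / ln e)) \<longlongrightarrow> 0) (at_right 0))"
    proof (rule eventually_mono[OF ev])
      fix d :: real assume d: "0 < d \<and> d \<le> d0 ex ey"
      have z: "Sigma_ratio ex ey C4 x e d = 0" for e using Sigma_zero[OF ex ey] d by auto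
      show "(if \<forall>\<^sub>F e in at_right 0. 1 - Sigma_ratio ex ey C4 x e d = 0 then (0::ereal) = \<infinity>
       else ((\<lambda>e. ereal (ln (1 - Sigma_ratio ex ey C4 x e d) / ln e)) \<longlongrightarrow> 0) (at_right 0))"
        using nt by (simp add: z zero_ereal_def)
    qed
  qed simp
  have SM: "sigma_minus_is ex ey C4 x \<infinity>" for x
    unfolding sigma_minus_is_def iter_index_is_def
  proof (intro exI[of _ "\<lambda>d. \<infinity>"] conjI)
    show "\<forall>\<^sub>F d in at_right 0. (if \<forall>\<^sub>F e in at_right 0. Sigma_ratio ex ey C4 x e d = 0 then (\<infinity>::ereal) = \<infinity>
       else ((\<lambda>e. ereal (ln (Sigma_ratio ex ey C4 x e d) / ln e)) \<longlongrightarrow> \<infinity>) (at_right 0))"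
    proof (rule eventually_mono[OF ev])
      fix d :: real assume d: "0 < d \<and> d \<le> d0 ex ey"
      have z: "Sigma_ratio ex ey C4 x e d = 0" for e using Sigma_zero[OF ex ey] d by auto
      show "(if \<forall>\<^sub>F e in at_right 0. Sigma_ratio ex ey C4 x e d = 0 then (\<infinity>::ereal) = \<infinity>
       else ((\<lambda>e. ereal (ln (Sigma_ratio ex ey C4 x e d) / ln e)) \<longlongrightarrow> \<infinity>) (at_right 0))"
        by (simp add: z)
    qed
  qed simp
  have A: "\<forall>x\<in>C4_connections. stability_index_is ex ey C4 x (-\<infinity>)"
  proof
    fix x
    show "stability_index_is ex ey C4 x (-\<infinity>)" unfolding stability_index_is_def
      by (intro exI[of _ 0] exI[of _ \<infinity>] conjI SP SM) simp
  qed
  have B: "completely_unstable ex ey C4"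
    unfolding completely_unstable_def ell_null_def
    using basin_negligible[OF ex ey d0p order_refl] d0p negligible_iff_null_sets by blast
  show ?thesis using A B by blast
qed

end
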